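(* For every $\varphi\in L^2(\mathbb{T})$ with $\hat\varphi(0)=0$ and all $s,t$, we have $\langle\varphi,X_{ts}(\varphi,\varphi)\rangle=0$ and $$2\langle\varphi,X^2_{ts}(\varphi,\varphi,\varphi)\rangle+\langle X_{ts}(\varphi,\varphi),X_{ts}(\varphi,\varphi)\rangle=0,$$ where $\langle\cdot,\cdot\rangle$ is the $L^2(\mathbb{T})$ scalar product.
   Context: For a distribution $f$ on $\mathbb{T}=[-\pi,\pi]$ write $f(\xi)=\sum_k\hat f(k)e^{ik\xi}$. $\dot X_\sigma$ is the bilinear operator $\dot X_\sigma(\varphi_1,\varphi_2)=\frac12U(-\sigma)\partial_\xi[(U(\sigma)\varphi_1)(U(\sigma)\varphi_2)]$ with $\widehat{U(t)\varphi}(k)=e^{ik^3t}\hat\varphi(k)$; equivalently $\widehat{\dot X_\sigma(\varphi_1,\varphi_2)}(k)=\frac{ik}{2}\sum_{k_1\ne0,k}e^{-3ikk_1k_2\sigma}\hat\varphi_1(k_1)\hat\varphi_2(k_2)$, $k_2=k-k_1$. $X_{ts}=\int_s^t\dot X_\sigma d\sigma$ (so $\widehat{X_{ts}(\varphi_1,\varphi_2)}(k)=\sum_{k_1\ne0,k}\frac{e^{-3ikk_1k_2s}-e^{-3ikk_1k_2t}}{6k_1k_2}\hat\varphi_1(k_1)\hat\varphi_2(k_2)$) and $X^2_{ts}(\varphi_1,\varphi_2,\varphi_3)=2\int_s^td\sigma\int_s^\sigma d\sigma_1\dot X_\sigma(\varphi_1,\dot X_{\sigma_1}(\varphi_2,\varphi_3))$,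 defined on trigonometric polynomials and extended by continuity (they are bounded on mean-zero $L^2$). *)

theory Defs
  imports "HOL-Analysis.Analysis"
begin

text \<open>Elements of L2(T) are represented by their Fourier coefficient sequences
  (Plancherel), f(xi) = sum_k f_k e^(i k xi).  Real-valued mean-zero L2 functions
  correspond to square-summable sequences with c(-k) = cnj (c k) and c 0 = 0.\<close>

definition l2_seq :: "(int \<Rightarrow> complex) \<Rightarrow> bool" where
  "l2_seq c \<longleftrightarrow> (\<lambda>k. (norm (c k))\<^sup>2) summable_on UNIV"

definition real_valued_seq :: "(int \<Rightarrow> complex) \<Rightarrow> bool" where
  "real_valued_seq c \<longleftrightarrow> (\<forall>k. c (-k) = cnj (c k))"

text \<open>L2(T) scalar product, via Parseval: integral over [-pi,pi] of f * conj g.\<close>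
definition l2_inner :: "(int \<Rightarrow> complex) \<Rightarrow> (int \<Rightarrow> complex) \<Rightarrow> complex" where
  "l2_inner f g = 2 * complex_of_real pi * (\<Sum>\<^sub>\<infinity>k. f k * cnj (g k))"

definition Xdot :: "real \<Rightarrow> (int \<Rightarrow> complex) \<Rightarrow> (int \<Rightarrow> complex) \<Rightarrow> int \<Rightarrow> complex" where
  "Xdot \<sigma> a b k = (\<i> * of_int k / 2) *
     (\<Sum>\<^sub>\<infinity>k1\<in>{k1. k1 \<noteq> 0 \<and> k1 \<noteq> k}.
        exp (- 3 * \<i> * of_int (k * k1 * (k - k1)) * complex_of_real \<sigma>) * a k1 * b (k - k1))"

text \<open>Fourier coefficients of X_ts(phi1,phi2) (closed form of the integral of Xdot).\<close>
definition Xts :: "real \<Rightarrow> real \<Rightarrow> (int \<Rightarrow> complex) \<Rightarrow> (int \<Rightarrow> complex) \<Rightarrow> int \<Rightarrow> complex" where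
  "Xts t s a b k =
     (\<Sum>\<^sub>\<infinity>k1\<in>{k1. k1 \<noteq> 0 \<and> k1 \<noteq> k}.
        (exp (- 3 * \<i> * of_int (k * k1 * (k - k1)) * complex_of_real s)
         - exp (- 3 * \<i> * of_int (k * k1 * (k - k1)) * complex_of_real t))
        / of_int (6 * k1 * (k - k1)) * a k1 * b (k - k1))"

text \<open>X^2_ts on trigonometric polynomials (finitely supported coefficient sequences):
  2 int_s^t dsigma int_s^sigma dsigma1 Xdot_sigma(phi1, Xdot_sigma1(phi2,phi3)),
  with oriented integrals.\<close>
definition X2_trig :: "real \<Rightarrow> real \<Rightarrow> (int \<Rightarrow> complex) \<Rightarrow> (int \<Rightarrow> complex) \<Rightarrow> (int \<Rightarrow> complex)
    \<Rightarrow> int \<Rightarrow> complex" where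
  "X2_trig t s a b c k =
     2 * (LBINT \<sigma>=ereal s..ereal t. (LBINT \<sigma>1=ereal s..ereal \<sigma>. Xdot \<sigma> a (Xdot \<sigma>1 b c) k))"

definition trunc :: "nat \<Rightarrow> (int \<Rightarrow> complex) \<Rightarrow> int \<Rightarrow> complex" where
  "trunc N a k = (if \<bar>k\<bar> \<le> int N then a k else 0)"

text \<open>Extension by continuity of X^2_ts to L2: the L2-limit of its values on the
  Fourier truncations.\<close>
definition X2ts :: "real \<Rightarrow> real \<Rightarrow> (int \<Rightarrow> complex) \<Rightarrow> (int \<Rightarrow> complex) \<Rightarrow> (int \<Rightarrow> complex)
    \<Rightarrow> int \<Rightarrow> complex" where
  "X2ts t s a b c = (THE \<psi>. l2_seq \<psi> \<and>
     (\<lambda>N. \<Sum>\<^sub>\<infinity>k. (norm (X2_trig t s (trunc N a) (trunc N b) (trunc N c) k - \<psi> k))\<^sup>2)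
       \<longlonglongrightarrow> 0)"

end

theory Submission
  imports Defs
begin

lemma infsum_dct:
  fixes f :: "nat \<Rightarrow> 'a::countable \<Rightarrow> 'b::{banach,second_countable_topology}" and g :: "'a \<Rightarrow> 'b" and w :: "'a \<Rightarrow> real"
  assumes w: "w summable_on UNIV"
  assumes bnd: "\<And>n x. norm (f n x) \<le> w x"
  assumes lim: "\<And>x. (\<lambda>n. f n x) \<longlonglongrightarrow> g x"
  shows "(\<lambda>n. infsum (f n) UNIV) \<longlonglongrightarrow> infsum g UNIV"
proof -
  have w0: "\<And>x. 0 \<le> w x" using bnd by (meson norm_ge_zero order_trans)
  have wi: "integrable (count_space UNIV) w"
    using w w0 by (metis abs_summable_equivalent abs_summable_on_def real_norm_def abs_of_nonneg summable_on_cong)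
  have gb: "norm (g x) \<le> w x" for x
    using tendsto_norm[OF lim[of x]] bnd[of _ x] by (intro LIMSEQ_le_const2) auto
  have fi: "Infinite_Set_Sum.abs_summable_on (f n) UNIV" for n
    unfolding Infinite_Set_Sum.abs_summable_on_def
    by (rule Bochner_Integration.integrable_bound[OF wi]) (auto simp: bnd w0)
  have gi: "Infinite_Set_Sum.abs_summable_on g UNIV"
    unfolding Infinite_Set_Sum.abs_summable_on_def
    by (rule Bochner_Integration.integrable_bound[OF wi]) (auto simp: gb w0)
  have "(\<lambda>n. infsetsum (f n) UNIV) \<longlonglongrightarrow> infsetsum g UNIV"
    unfolding infsetsum_def
    by (rule integral_dominated_convergence[where w=w]) (auto simp: wi lim bnd)
  thus ?thesis using fi gi by (simp add: infsetsum_infsum)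
qed

definition ee :: "int \<Rightarrow> real \<Rightarrow> complex" where
  "ee x \<sigma> = exp (- 3 * \<i> * of_int x * complex_of_real \<sigma>)"

lemma ee_add: "ee (x + y) \<sigma> = ee x \<sigma> * ee y \<sigma>"
  unfolding ee_def by (simp add: exp_add[symmetric] algebra_simps)

lemma ee_0[simp]: "ee 0 \<sigma> = 1" by (simp add: ee_def)

lemma cnj_ee: "cnj (ee x \<sigma>) = ee (-x) \<sigma>"
  unfolding ee_def by (simp add: exp_cnj)

lemma norm_ee[simp]: "norm (ee x \<sigma>) = 1"
  unfolding ee_def by (simp add: norm_exp_eq_Re)

lemma ee_deriv: "((\<lambda>\<sigma>. ee x \<sigma>) has_vector_derivative (- 3 * \<i> * of_int x) * ee x \<sigma>) (at \<sigma> within S)"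
proof -
  have "((\<lambda>z. exp (- 3 * \<i> * of_int x * z)) has_field_derivative (exp (- 3 * \<i> * of_int x * complex_of_real \<sigma>) * (- 3 * \<i> * of_int x))) (at (complex_of_real \<sigma>))"
    by (auto intro!: derivative_eq_intros)
  from has_vector_derivative_real_field[OF this, where s=S] show ?thesis
    unfolding ee_def by (simp add: mult.commute)
qed

definition fsupp :: "nat \<Rightarrow> (int \<Rightarrow> complex) \<Rightarrow> bool" where
  "fsupp N a \<longleftrightarrow> (\<forall>k. int N < \<bar>k\<bar> \<longrightarrow> a k = 0)"

lemma fsuppD: "fsupp N a \<Longrightarrow> k \<notin> {-int N..int N} \<Longrightarrow> a k = 0"
  unfolding fsupp_def by auto

lemma infsum_fin:
  assumes "finite F" "\<And>x. x \<notin> F \<Longrightarrow> f x = 0"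
  shows "infsum f UNIV = sum f F"
proof -
  have "infsum f UNIV = infsum f F" by (rule infsum_cong_neutral) (use assms in auto)
  thus ?thesis using assms by simp
qed

lemma Xdot_UNIV:
  assumes "a 0 = 0" "b 0 = 0"
  shows "Xdot \<sigma> a b k = (\<i> * of_int k / 2) * (\<Sum>\<^sub>\<infinity>k1. ee (k*k1*(k-k1)) \<sigma> * a k1 * b (k-k1))"
  unfolding Xdot_def ee_def
  by (rule arg_cong[where f="\<lambda>x. _ * x"], rule infsum_cong_neutral) (use assms in auto)

lemma Xdot_fin:
  assumes "fsupp N a" "a 0 = 0" "b 0 = 0"
  shows "Xdot \<sigma> a b k = (\<i> * of_int k / 2) * (\<Sum>k1\<in>{-int N..int N}. ee (k*k1*(k-k1)) \<sigma> * a k1 * b (k-k1))"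
  unfolding Xdot_UNIV[where a=a and b=b, OF assms(2,3)]
  by (subst infsum_fin[of "{-int N..int N}"]) (use fsuppD[OF assms(1)] in auto)

definition cX :: "real \<Rightarrow> real \<Rightarrow> int \<Rightarrow> int \<Rightarrow> complex" where
  "cX t s k k1 = (ee (k*k1*(k-k1)) s - ee (k*k1*(k-k1)) t) / of_int (6 * k1 * (k - k1))"

lemma Xts_UNIV:
  assumes "a 0 = 0" "b 0 = 0"
  shows "Xts t s a b k = (\<Sum>\<^sub>\<infinity>k1. cX t s k k1 * a k1 * b (k-k1))"
  unfolding Xts_def ee_def cX_def
  by (rule infsum_cong_neutral) (use assms in auto)

lemma Xts_fin:
  assumes "fsupp N a" "a 0 = 0" "b 0 = 0"
  shows "Xts t s a b k = (\<Sum>k1\<in>{-int N..int N}. cX t s k k1 * a k1 * b (k-k1))"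
  unfolding Xts_UNIV[where a=a and b=b, OF assms(2,3)]
  by (subst infsum_fin[of "{-int N..int N}"]) (use fsuppD[OF assms(1)] in auto)

lemma Xdot_0[simp]: "Xdot \<sigma> a b 0 = 0" by (simp add: Xdot_def)
lemma Xts_0[simp]: "Xts t s a b 0 = 0" by (simp add: Xts_def)
lemma Xts_same[simp]: "Xts s s a b = (\<lambda>k. 0)" by (simp add: Xts_def fun_eq_iff)

lemma Xdot_zero_right[simp]: "Xdot \<sigma> a (\<lambda>k. 0) = (\<lambda>k. 0)" by (simp add: Xdot_def fun_eq_iff)

lemma fsupp_Xdot:
  assumes "fsupp N a" "fsupp M b"
  shows "fsupp (N+M) (Xdot \<sigma> a b)"
  unfolding fsupp_def
proof (intro allI impI)
  fix k assume k: "int (N+M) < \<bar>k\<bar>"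
  have "a k1 * b (k - k1) = 0" for k1
  proof (cases "\<bar>k1\<bar> \<le> int N")
    case True then have "int M < \<bar>k-k1\<bar>" using k by auto
    then show ?thesis using assms(2) unfolding fsupp_def by auto
  next
    case False then show ?thesis using assms(1) unfolding fsupp_def by auto
  qed
  then show "Xdot \<sigma> a b k = 0" unfolding Xdot_def
    by (subst infsum_0) (auto simp: mult.assoc)
qed

lemma fsupp_Xts:
  assumes "fsupp N a" "fsupp M b"
  shows "fsupp (N+M) (Xts t s a b)"
  unfolding fsupp_def
proof (intro allI impI)
  fix k assume k: "int (N+M) < \<bar>k\<bar>"
  have "a k1 * b (k - k1) = 0" for k1
  proof (cases "\<bar>k1\<bar> \<le> int N")
    case True then have "int M < \<bar>k-k1\<bar>" using k by auto
    then show ?thesis using assms(2) unfolding fsupp_def by auto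
  next
    case False then show ?thesis using assms(1) unfolding fsupp_def by auto
  qed
  then show "Xts t s a b k = 0" unfolding Xts_def
    by (subst infsum_0) (auto simp: mult.assoc)
qed

lemma Xts_deriv:
  assumes "fsupp N b" "b 0 = 0" "c 0 = 0"
  shows "((\<lambda>\<tau>. Xts \<tau> s b c m) has_vector_derivative Xdot \<tau> b c m) (at \<tau> within S)"
proof -
  have "((\<lambda>\<tau>. \<Sum>k1\<in>{-int N..int N}. cX \<tau> s m k1 * b k1 * c (m-k1)) has_vector_derivative
     (\<Sum>k1\<in>{-int N..int N}. (\<i> * of_int m / 2) * (ee (m*k1*(m-k1)) \<tau> * b k1 * c (m-k1)))) (at \<tau> within S)"
  proof (rule has_vector_derivative_sum)
    fix k1
    show "((\<lambda>\<tau>. cX \<tau> s m k1 * b k1 * c (m-k1)) has_vector_derivative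
       (\<i> * of_int m / 2) * (ee (m*k1*(m-k1)) \<tau> * b k1 * c (m-k1))) (at \<tau> within S)"
    proof (cases "k1 = 0 \<or> k1 = m")
      case True then show ?thesis using assms by auto
    next
      case False
      have d: "((\<lambda>\<tau>. cX \<tau> s m k1 * b k1 * c (m-k1)) has_vector_derivative
        (0 - (- 3 * \<i> * of_int (m*k1*(m-k1))) * ee (m*k1*(m-k1)) \<tau>) / of_int (6 * k1 * (m - k1)) * b k1 * c (m-k1)) (at \<tau> within S)"
        unfolding cX_def
        by (intro has_vector_derivative_mult_left has_vector_derivative_divide has_vector_derivative_diff ee_deriv has_vector_derivative_const)
      show ?thesis
        by (rule has_vector_derivative_eq_rhs[OF d]) (use False in \<open>auto simp: field_simps\<close>)
    qed
  qed
  then show ?thesis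
    unfolding Xts_fin[where a=b and b=c, OF assms] Xdot_fin[where a=b and b=c, OF assms]
    by (simp add: sum_distrib_left)
qed


definition Ph :: "int \<Rightarrow> real \<Rightarrow> complex" where
  "Ph x \<sigma> = (if x = 0 then complex_of_real \<sigma> else ee x \<sigma> / (- 3 * \<i> * of_int x))"

lemma Ph_deriv: "((\<lambda>\<sigma>. Ph x \<sigma>) has_vector_derivative ee x \<sigma>) (at \<sigma> within S)"
proof (cases "x = 0")
  case True
  then show ?thesis unfolding Ph_def
    using has_vector_derivative_of_real[OF DERIV_ident[where F="at \<sigma> within S"]] by simp
next
  case False
  have "((\<lambda>\<sigma>. ee x \<sigma> / (- 3 * \<i> * of_int x)) has_vector_derivative ((- 3 * \<i> * of_int x) * ee x \<sigma>) / (- 3 * \<i> * of_int x)) (at \<sigma> within S)"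
    by (intro has_vector_derivative_divide ee_deriv)
  then show ?thesis using False unfolding Ph_def by simp
qed

lemma ee_cont[continuous_intros]: "continuous_on S (\<lambda>\<sigma>. ee x \<sigma>)"
  unfolding ee_def by (intro continuous_intros)

lemma Xdot_cont:
  assumes "fsupp N b" "b 0 = 0" "c 0 = 0"
  shows "continuous_on S (\<lambda>\<sigma>. Xdot \<sigma> b c m)"
  unfolding Xdot_fin[where a=b and b=c, OF assms] by (intro continuous_intros)

lemma inner_int:
  assumes "fsupp N a" "a 0 = 0" "fsupp N b" "b 0 = 0" "c 0 = 0"
  shows "(LBINT \<sigma>1=s..\<sigma>. Xdot \<sigma> a (Xdot \<sigma>1 b c) k) = Xdot \<sigma> a (Xts \<sigma> s b c) k"
proof -
  have eq1: "Xdot \<sigma> a (Xdot \<sigma>1 b c) k = (\<i> * of_int k / 2) * (\<Sum>k1\<in>{-int N..int N}. ee (k*k1*(k-k1)) \<sigma> * a k1 * Xdot \<sigma>1 b c (k-k1))" for \<sigma>1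
    by (rule Xdot_fin[OF assms(1,2)]) simp
  have eq2: "Xdot \<sigma> a (Xts \<sigma>1 s b c) k = (\<i> * of_int k / 2) * (\<Sum>k1\<in>{-int N..int N}. ee (k*k1*(k-k1)) \<sigma> * a k1 * Xts \<sigma>1 s b c (k-k1))" for \<sigma>1
    by (rule Xdot_fin[OF assms(1,2)]) simp
  have "(LBINT \<sigma>1=s..\<sigma>. Xdot \<sigma> a (Xdot \<sigma>1 b c) k) = Xdot \<sigma> a (Xts \<sigma> s b c) k - Xdot \<sigma> a (Xts s s b c) k"
  proof (rule interval_integral_FTC_finite)
    show "continuous_on {min s \<sigma>..max s \<sigma>} (\<lambda>\<sigma>1. Xdot \<sigma> a (Xdot \<sigma>1 b c) k)"
      unfolding eq1 by (intro continuous_intros Xdot_cont[where b=b and c=c, OF assms(3,4,5)])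
    fix x
    show "((\<lambda>\<sigma>1. Xdot \<sigma> a (Xts \<sigma>1 s b c) k) has_vector_derivative Xdot \<sigma> a (Xdot x b c) k) (at x within {min s \<sigma>..max s \<sigma>})"
      unfolding eq1 eq2
      by (intro has_vector_derivative_mult_right has_vector_derivative_sum has_vector_derivative_mult_right Xts_deriv[where b=b and c=c, OF assms(3,4,5)])
  qed
  then show ?thesis by simp
qed

definition Fant :: "nat \<Rightarrow> real \<Rightarrow> (int \<Rightarrow> complex) \<Rightarrow> (int \<Rightarrow> complex) \<Rightarrow> (int \<Rightarrow> complex) \<Rightarrow> int \<Rightarrow> real \<Rightarrow> complex" where
  "Fant N s a b c k \<sigma> = (\<Sum>k1\<in>{-int N..int N}. \<Sum>k2\<in>{-int N..int N}.
     (\<i> * of_int k / 2) / of_int (6 * k2 * (k-k1-k2)) * a k1 * b k2 * c (k-k1-k2) *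
     (ee ((k-k1)*k2*(k-k1-k2)) s * Ph (k*k1*(k-k1)) \<sigma> - Ph (k*k1*(k-k1) + (k-k1)*k2*(k-k1-k2)) \<sigma>))"

lemma Xdot_Xts_expand:
  assumes "fsupp N a" "a 0 = 0" "fsupp N b" "b 0 = 0" "c 0 = 0"
  shows "Xdot \<sigma> a (Xts \<sigma> s b c) k = (\<i> * of_int k / 2) * (\<Sum>k1\<in>{-int N..int N}. ee (k*k1*(k-k1)) \<sigma> * a k1 *
      (\<Sum>k2\<in>{-int N..int N}. cX \<sigma> s (k-k1) k2 * b k2 * c (k-k1-k2)))"
  unfolding Xts_fin[where a=b and b=c, OF assms(3,4,5)] by (rule Xdot_fin[OF assms(1,2)]) (simp add: cX_def)

lemma alg2: "C / D * a * b * c * (Es * e1 - e1 * eB) = C * (e1 * a * ((Es - eB) / D * b * c))"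
  for C D a b c Es e1 eB :: complex
  by (simp add: algebra_simps)

lemma Fant_deriv:
  assumes "fsupp N a" "a 0 = 0" "fsupp N b" "b 0 = 0" "c 0 = 0"
  shows "((\<lambda>\<sigma>. Fant N s a b c k \<sigma>) has_vector_derivative Xdot \<sigma> a (Xts \<sigma> s b c) k) (at \<sigma> within S)"
proof -
  note eq2 = Xdot_Xts_expand[where a=a and b=b and c=c, OF assms]
  have d: "((\<lambda>\<sigma>. Fant N s a b c k \<sigma>) has_vector_derivative (\<Sum>k1\<in>{-int N..int N}. \<Sum>k2\<in>{-int N..int N}.
     (\<i> * of_int k / 2) / of_int (6 * k2 * (k-k1-k2)) * a k1 * b k2 * c (k-k1-k2) *
     (ee ((k-k1)*k2*(k-k1-k2)) s * ee (k*k1*(k-k1)) \<sigma> - ee (k*k1*(k-k1) + (k-k1)*k2*(k-k1-k2)) \<sigma>))) (at \<sigma> within S)"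
    unfolding Fant_def
    by (intro has_vector_derivative_sum has_vector_derivative_mult_right has_vector_derivative_diff Ph_deriv)
  show ?thesis
  proof (rule has_vector_derivative_eq_rhs[OF d])
    show "(\<Sum>k1\<in>{-int N..int N}. \<Sum>k2\<in>{-int N..int N}.
     (\<i> * of_int k / 2) / of_int (6 * k2 * (k-k1-k2)) * a k1 * b k2 * c (k-k1-k2) *
     (ee ((k-k1)*k2*(k-k1-k2)) s * ee (k*k1*(k-k1)) \<sigma> - ee (k*k1*(k-k1) + (k-k1)*k2*(k-k1-k2)) \<sigma>))
      = Xdot \<sigma> a (Xts \<sigma> s b c) k"
      unfolding eq2 sum_distrib_left
      unfolding cX_def ee_add by (intro sum.cong refl alg2)
  qed
qed

lemma X2_trig_Fant:
  assumes "fsupp N a" "a 0 = 0" "fsupp N b" "b 0 = 0" "fsupp N c" "c 0 = 0"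
  shows "X2_trig t s a b c k = 2 * (Fant N s a b c k t - Fant N s a b c k s)"
proof -
  have "X2_trig t s a b c k = 2 * (LBINT \<sigma>=s..t. Xdot \<sigma> a (Xts \<sigma> s b c) k)"
    unfolding X2_trig_def inner_int[where a=a and b=b and c=c, OF assms(1-4,6)] ..
  also have "(LBINT \<sigma>=s..t. Xdot \<sigma> a (Xts \<sigma> s b c) k) = Fant N s a b c k t - Fant N s a b c k s"
  proof (rule interval_integral_FTC_finite)
    show "continuous_on {min s t..max s t} (\<lambda>\<sigma>. Xdot \<sigma> a (Xts \<sigma> s b c) k)"
      unfolding Xdot_Xts_expand[where a=a and b=b and c=c, OF assms(1-4,6)]
      unfolding cX_def divide_inverse by (intro continuous_intros)
    show "((\<lambda>\<sigma>. Fant N s a b c k \<sigma>) has_vector_derivative Xdot x a (Xts x s b c) k) (at x within {min s t..max s t})" for x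
      by (rule Fant_deriv[where a=a and b=b and c=c, OF assms(1-4,6)])
  qed
  finally show ?thesis .
qed

definition Kf :: "real \<Rightarrow> real \<Rightarrow> int \<Rightarrow> int \<Rightarrow> int \<Rightarrow> complex" where
  "Kf t s k k1 k2 = (\<i> * of_int k / 2) / of_int (6 * k2 * (k-k1-k2)) *
     (ee ((k-k1)*k2*(k-k1-k2)) s * (Ph (k*k1*(k-k1)) t - Ph (k*k1*(k-k1)) s)
      - (Ph (k*k1*(k-k1) + (k-k1)*k2*(k-k1-k2)) t - Ph (k*k1*(k-k1) + (k-k1)*k2*(k-k1-k2)) s))"

lemma alg1: "2 * (C * a * b * c * (E * p - q) - C * a * b * c * (E * p' - q')) = 2 * (C * (E * (p - p') - (q - q'))) * a * b * c"
  for C a b c E p q p' q' :: complex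
  by (simp add: algebra_simps)

lemma X2_trig_formula:
  assumes "fsupp N a" "a 0 = 0" "fsupp N b" "b 0 = 0" "fsupp N c" "c 0 = 0"
  shows "X2_trig t s a b c k = (\<Sum>k1\<in>{-int N..int N}. \<Sum>k2\<in>{-int N..int N}.
      2 * Kf t s k k1 k2 * a k1 * b k2 * c (k-k1-k2))"
  unfolding X2_trig_Fant[where a=a and b=b and c=c, OF assms] Fant_def sum_subtractf[symmetric] sum_distrib_left
  unfolding Kf_def by (intro sum.cong refl alg1)

lemma X2_trig_deriv:
  assumes "fsupp N a" "a 0 = 0" "fsupp N b" "b 0 = 0" "fsupp N c" "c 0 = 0"
  shows "((\<lambda>\<tau>. X2_trig \<tau> s a b c k) has_vector_derivative 2 * Xdot \<tau> a (Xts \<tau> s b c) k) (at \<tau> within S)"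
  unfolding X2_trig_Fant[where a=a and b=b and c=c, OF assms]
  using Fant_deriv[where a=a and b=b and c=c, OF assms(1-4,6)]
  by (auto intro!: derivative_eq_intros)

lemma X2_trig_same: 
  assumes "fsupp N a" "a 0 = 0" "fsupp N b" "b 0 = 0" "fsupp N c" "c 0 = 0"
  shows "X2_trig s s a b c k = 0"
  by (simp only: X2_trig_Fant[where a=a and b=b and c=c, OF assms] diff_self mult_zero_right)


lemma fin_summ:
  assumes "finite F" "\<And>x. x \<notin> F \<Longrightarrow> f x = 0"
  shows "f summable_on A"
  by (rule finite_nonzero_values_imp_summable_on, rule finite_subset[OF _ assms(1)]) (use assms(2) in auto)

lemma bij_neg2: "bij_betw (\<lambda>(p::int,q::int). (p,-q)) UNIV UNIV"
  by (rule bij_betwI[where g="\<lambda>(p,q). (p,-q)"]) auto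
lemma bij_swap: "bij_betw (\<lambda>(p::int,q::int). (q,p)) UNIV UNIV"
  by (rule bij_betwI[where g="\<lambda>(p,q). (q,p)"]) auto
lemma bij_conv: "bij_betw (\<lambda>(p::int,q::int). (p+q,p)) UNIV UNIV"
  by (rule bij_betwI[where g="\<lambda>(k,k1). (k1,k-k1)"]) auto
lemma bij_uminus: "bij_betw (uminus::int\<Rightarrow>int) UNIV UNIV"
  by (rule bij_betwI[where g="uminus"]) auto

lemma rvD: "real_valued_seq a \<Longrightarrow> cnj (a k) = a (-k)"
  unfolding real_valued_seq_def by (metis complex_cnj_cnj minus_minus)

lemma conv_rv:
  assumes "\<And>k k1. cnj (c k k1) = c (-k) (-k1)" "real_valued_seq a" "real_valued_seq b"
  shows "real_valued_seq (\<lambda>k. \<Sum>\<^sub>\<infinity>k1. c k k1 * a k1 * b (k-k1))"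
  unfolding real_valued_seq_def
proof
  fix k
  have "cnj (\<Sum>\<^sub>\<infinity>k1. c k k1 * a k1 * b (k-k1)) = (\<Sum>\<^sub>\<infinity>k1. c (-k) (-k1) * a (-k1) * b (-k - (-k1)))"
    by (simp add: infsum_cnj[symmetric] assms(1) rvD[OF assms(2)] rvD[OF assms(3)])
  also have "\<dots> = (\<Sum>\<^sub>\<infinity>k1. c (-k) k1 * a k1 * b (-k - k1))"
    by (rule infsum_reindex_bij_betw[OF bij_uminus, where f="\<lambda>k1. c (-k) k1 * a k1 * b (-k - k1)"])
  finally show "(\<Sum>\<^sub>\<infinity>k1. c (- k) k1 * a k1 * b (- k - k1)) = cnj (\<Sum>\<^sub>\<infinity>k1. c k k1 * a k1 * b (k - k1))"
    by simp
qed

lemma rv_Xdot: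
  assumes "a 0 = 0" "b 0 = 0" "real_valued_seq a" "real_valued_seq b"
  shows "real_valued_seq (Xdot \<sigma> a b)"
proof -
  have "real_valued_seq (\<lambda>k. \<Sum>\<^sub>\<infinity>k1. ee (k*k1*(k-k1)) \<sigma> * a k1 * b (k-k1))"
  proof (rule conv_rv[OF _ assms(3,4)])
    fix k k1 :: int
    have "- (k * k1 * (k - k1)) = (-k) * (-k1) * (-k - (-k1))" by (simp add: algebra_simps)
    then show "cnj (ee (k * k1 * (k - k1)) \<sigma>) = ee (- k * - k1 * (- k - - k1)) \<sigma>"
      by (simp only: cnj_ee)
  qed
  then show ?thesis
    unfolding real_valued_seq_def Xdot_UNIV[where a=a and b=b, OF assms(1,2)]
    by simp
qed

lemma cnj_cX: "cnj (cX t s k k1) = cX t s (-k) (-k1)"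
proof -
  have "- (k * k1 * (k - k1)) = (-k) * (-k1) * (-k - (-k1))" by (simp add: algebra_simps)
  moreover have "6 * k1 * (k - k1) = 6 * (-k1) * (-k - (-k1))" by (simp add: algebra_simps)
  ultimately show ?thesis unfolding cX_def
    by (simp only: complex_cnj_diff complex_cnj_divide cnj_ee complex_cnj_of_int)
qed

lemma rv_Xts:
  assumes "a 0 = 0" "b 0 = 0" "real_valued_seq a" "real_valued_seq b"
  shows "real_valued_seq (Xts t s a b)"
  unfolding Xts_UNIV[where a=a and b=b, OF assms(1,2)]
  by (rule conv_rv[where c="cX t s" and a=a and b=b, OF cnj_cX assms(3,4)])

lemma P4:
  assumes a: "fsupp N a" "a 0 = 0" "real_valued_seq a"
      and p: "fsupp M \<psi>" "\<psi> 0 = 0" "real_valued_seq \<psi>"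
  shows "(\<Sum>\<^sub>\<infinity>k. a k * cnj (Xdot \<sigma> a \<psi> k)) = -(1/2) * (\<Sum>\<^sub>\<infinity>k. Xdot \<sigma> a a k * cnj (\<psi> k))"
proof -
  note ra = rvD[OF a(3)] and rp = rvD[OF p(3)]
  have za: "a k = 0" if "\<not> \<bar>k\<bar> \<le> int N" for k using a(1) that unfolding fsupp_def by auto
  define T where "T = (\<lambda>(p,q). ee (p*q*(p+q)) \<sigma> * a p * a q * \<psi> (-p-q))"
  define g where "g = (\<lambda>(k,k1). a k * cnj (\<i> * of_int k / 2) * cnj (ee (k*k1*(k-k1)) \<sigma> * a k1 * \<psi> (k-k1)))"
  have F: "finite ({-int N..int N} \<times> {-int N..int N})" by simp
  have sg: "g summable_on UNIV"
  proof (rule fin_summ[OF F])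
    fix x assume "x \<notin> {-int N..int N} \<times> {-int N..int N}"
    then show "g x = 0" by (cases x) (auto simp: g_def za)
  qed
  have sT: "(\<lambda>x. c x * T x) summable_on UNIV" for c
  proof (rule fin_summ[OF F])
    fix x assume "x \<notin> {-int N..int N} \<times> {-int N..int N}"
    then show "c x * T x = 0" by (cases x) (auto simp: T_def za)
  qed
  have "(\<Sum>\<^sub>\<infinity>k. a k * cnj (Xdot \<sigma> a \<psi> k)) = (\<Sum>\<^sub>\<infinity>k. \<Sum>\<^sub>\<infinity>k1. g (k,k1))"
  proof (rule infsum_cong)
    fix k
    show "a k * cnj (Xdot \<sigma> a \<psi> k) = (\<Sum>\<^sub>\<infinity>k1. g (k,k1))"
    proof -
      have "a k * cnj (Xdot \<sigma> a \<psi> k) = (a k * cnj (\<i> * of_int k / 2)) * (\<Sum>\<^sub>\<infinity>k1. cnj (ee (k*k1*(k-k1)) \<sigma> * a k1 * \<psi> (k-k1)))"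
        unfolding Xdot_UNIV[where a=a and b=\<psi>, OF a(2) p(2)] by (simp only: infsum_cnj[symmetric] complex_cnj_mult mult.assoc)
      also have "\<dots> = (\<Sum>\<^sub>\<infinity>k1. g (k,k1))"
        unfolding g_def by (simp only: prod.case infsum_cmult_right')
      finally show ?thesis .
    qed
  qed
  also have "\<dots> = (\<Sum>\<^sub>\<infinity>x. g x)"
    using infsum_Sigma'_banach[of "\<lambda>k k1. g (k,k1)" UNIV "\<lambda>_. UNIV"] sg by simp
  also have "\<dots> = (\<Sum>\<^sub>\<infinity>x. g ((\<lambda>(p,q). (p,-q)) x))"
    by (rule infsum_reindex_bij_betw[OF bij_neg2, symmetric])
  also have "\<dots> = (\<Sum>\<^sub>\<infinity>x. (- \<i> * of_int (fst x) / 2) * T x)"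
  proof (rule infsum_cong)
    fix x :: "int \<times> int"
    obtain p q where x: "x = (p,q)" by (cases x)
    have e: "- (p * - q * (p - - q)) = p * q * (p + q)" by (simp add: algebra_simps)
    have e2: "- (p - - q) = -p - q" by simp
    have e3: "\<psi> (- q - p) = \<psi> (- p - q)" by (rule arg_cong[where f=\<psi>]) simp
    show "g ((\<lambda>(p,q). (p,-q)) x) = (- \<i> * of_int (fst x) / 2) * T x"
      unfolding x g_def T_def by (simp add: ra rp cnj_ee e e2 e3)
  qed
  finally have L1: "(\<Sum>\<^sub>\<infinity>k. a k * cnj (Xdot \<sigma> a \<psi> k)) = (\<Sum>\<^sub>\<infinity>x. (- \<i> * of_int (fst x) / 2) * T x)" .
  have "(\<Sum>\<^sub>\<infinity>x. (- \<i> * of_int (fst x) / 2) * T x) = (\<Sum>\<^sub>\<infinity>x. (- \<i> * of_int (fst ((\<lambda>(p,q). (q,p)) x)) / 2) * T ((\<lambda>(p,q). (q,p)) x))"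
    by (rule infsum_reindex_bij_betw[OF bij_swap, symmetric])
  also have "\<dots> = (\<Sum>\<^sub>\<infinity>x. (- \<i> * of_int (snd x) / 2) * T x)"
  proof (rule infsum_cong)
    fix x :: "int \<times> int"
    obtain p q where x: "x = (p,q)" by (cases x)
    have e: "ee (q * p * (q + p)) \<sigma> = ee (p * q * (p + q)) \<sigma>" by (rule arg_cong[where f="\<lambda>x. ee x \<sigma>"]) (simp add: algebra_simps)
    have e2: "\<psi> (-q - p) = \<psi> (-p - q)" by (rule arg_cong[where f=\<psi>]) simp
    show "(- \<i> * of_int (fst ((\<lambda>(p,q). (q,p)) x)) / 2) * T ((\<lambda>(p,q). (q,p)) x) = (- \<i> * of_int (snd x) / 2) * T x"
      unfolding x T_def prod.case fst_conv snd_conv e e2 by (simp add: mult_ac)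
  qed
  finally have L2: "(\<Sum>\<^sub>\<infinity>x. (- \<i> * of_int (fst x) / 2) * T x) = (\<Sum>\<^sub>\<infinity>x. (- \<i> * of_int (snd x) / 2) * T x)" .
  have L3: "2 * (\<Sum>\<^sub>\<infinity>x. (- \<i> * of_int (fst x) / 2) * T x) = (\<Sum>\<^sub>\<infinity>x. (- \<i> * of_int (fst x + snd x) / 2) * T x)"
  proof -
    have "2 * (\<Sum>\<^sub>\<infinity>x. (- \<i> * of_int (fst x) / 2) * T x) = (\<Sum>\<^sub>\<infinity>x. (- \<i> * of_int (fst x) / 2) * T x) + (\<Sum>\<^sub>\<infinity>x. (- \<i> * of_int (snd x) / 2) * T x)"
      using L2 by simp
    also have "\<dots> = (\<Sum>\<^sub>\<infinity>x. (- \<i> * of_int (fst x) / 2) * T x + (- \<i> * of_int (snd x) / 2) * T x)"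
      by (rule infsum_add[symmetric]) (rule sT)+
    also have "\<dots> = (\<Sum>\<^sub>\<infinity>x. (- \<i> * of_int (fst x + snd x) / 2) * T x)"
      by (rule infsum_cong) (simp add: algebra_simps)
    finally show ?thesis .
  qed
  define h where "h = (\<lambda>(k,k1). (\<i> * of_int k / 2 * \<psi> (-k)) * (ee (k*k1*(k-k1)) \<sigma> * a k1 * a (k-k1)))"
  have sh: "h summable_on UNIV"
  proof (rule fin_summ[where F="{-int (2*N)..int (2*N)} \<times> {-int N..int N}"])
    fix x assume x: "x \<notin> {-int (2*N)..int (2*N)} \<times> {-int N..int N}"
    obtain k k1 where xx: "x = (k,k1)" by (cases x)
    show "h x = 0"
    proof (cases "\<bar>k1\<bar> \<le> int N")
      case True
      then have "\<not> \<bar>k - k1\<bar> \<le> int N" using x xx by auto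
      then show ?thesis by (simp add: h_def xx za)
    next
      case False then show ?thesis by (simp add: h_def xx za)
    qed
  qed simp
  have "(\<Sum>\<^sub>\<infinity>k. Xdot \<sigma> a a k * cnj (\<psi> k)) = (\<Sum>\<^sub>\<infinity>k. \<Sum>\<^sub>\<infinity>k1. h (k,k1))"
  proof (rule infsum_cong)
    fix k
    show "Xdot \<sigma> a a k * cnj (\<psi> k) = (\<Sum>\<^sub>\<infinity>k1. h (k,k1))"
    proof -
      have "Xdot \<sigma> a a k * cnj (\<psi> k) = (\<i> * of_int k / 2 * \<psi> (-k)) * (\<Sum>\<^sub>\<infinity>k1. ee (k*k1*(k-k1)) \<sigma> * a k1 * a (k-k1))"
        unfolding Xdot_UNIV[where a=a and b=a, OF a(2) a(2)] by (simp add: rp mult_ac)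
      also have "\<dots> = (\<Sum>\<^sub>\<infinity>k1. h (k,k1))"
        unfolding h_def by (simp only: prod.case infsum_cmult_right')
      finally show ?thesis .
    qed
  qed
  also have "\<dots> = (\<Sum>\<^sub>\<infinity>x. h x)"
    using infsum_Sigma'_banach[of "\<lambda>k k1. h (k,k1)" UNIV "\<lambda>_. UNIV"] sh by simp
  also have "\<dots> = (\<Sum>\<^sub>\<infinity>x. h ((\<lambda>(p,q). (p+q,p)) x))"
    by (rule infsum_reindex_bij_betw[OF bij_conv, symmetric])
  also have "\<dots> = (\<Sum>\<^sub>\<infinity>x. (\<i> * of_int (fst x + snd x) / 2) * T x)"
  proof (rule infsum_cong)
    fix x :: "int \<times> int"
    obtain p q where x: "x = (p,q)" by (cases x)
    have e: "ee ((p + q) * p * (p + q - p)) \<sigma> = ee (p * q * (p + q)) \<sigma>" by (rule arg_cong[where f="\<lambda>x. ee x \<sigma>"]) (simp add: algebra_simps)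
    have e2: "\<psi> (-(p + q)) = \<psi> (-p - q)" by (rule arg_cong[where f=\<psi>]) simp
    have e3: "a (p + q - p) = a q" by simp
    show "h ((\<lambda>(p,q). (p+q,p)) x) = (\<i> * of_int (fst x + snd x) / 2) * T x"
      unfolding x h_def T_def prod.case fst_conv snd_conv e e2 e3 by (simp add: mult_ac)
  qed
  finally have R: "(\<Sum>\<^sub>\<infinity>k. Xdot \<sigma> a a k * cnj (\<psi> k)) = (\<Sum>\<^sub>\<infinity>x. (\<i> * of_int (fst x + snd x) / 2) * T x)" .
  have "(\<Sum>\<^sub>\<infinity>x. (- \<i> * of_int (fst x + snd x) / 2) * T x) = - (\<Sum>\<^sub>\<infinity>x. (\<i> * of_int (fst x + snd x) / 2) * T x)"
  proof -
    have "(\<Sum>\<^sub>\<infinity>x. (- \<i> * of_int (fst x + snd x) / 2) * T x) = (\<Sum>\<^sub>\<infinity>x. - ((\<i> * of_int (fst x + snd x) / 2) * T x))"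
      by (rule infsum_cong) (simp add: algebra_simps)
    also have "\<dots> = - (\<Sum>\<^sub>\<infinity>x. (\<i> * of_int (fst x + snd x) / 2) * T x)"
      by (rule infsum_uminus)
    finally show ?thesis .
  qed
  then show ?thesis using L1 L3 R by (simp add: field_simps)
qed


lemma cnj_sum_real:
  assumes "real_valued_seq x" "real_valued_seq y"
  shows "cnj (\<Sum>\<^sub>\<infinity>k. x k * cnj (y k)) = (\<Sum>\<^sub>\<infinity>k. x k * cnj (y k))"
proof -
  have "cnj (\<Sum>\<^sub>\<infinity>k. x k * cnj (y k)) = (\<Sum>\<^sub>\<infinity>k. x (-k) * cnj (y (-k)))"
    by (simp add: infsum_cnj[symmetric] rvD[OF assms(1)] rvD[OF assms(2), symmetric])
  also have "\<dots> = (\<Sum>\<^sub>\<infinity>k. x k * cnj (y k))"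
    by (rule infsum_reindex_bij_betw[OF bij_uminus, where f="\<lambda>k. x k * cnj (y k)"])
  finally show ?thesis .
qed

lemma cnj_sum_swap: "cnj (\<Sum>\<^sub>\<infinity>k. x k * cnj (y k)) = (\<Sum>\<^sub>\<infinity>k. y k * cnj (x k))"
  by (simp add: infsum_cnj[symmetric] mult.commute)

lemma sum_box_infsum:
  assumes "fsupp N x"
  shows "(\<Sum>k\<in>{-int N..int N}. x k * y k) = (\<Sum>\<^sub>\<infinity>k. x k * y k)"
  by (rule infsum_fin[symmetric]) (use fsuppD[OF assms] in auto)

lemma sum_box_infsum2:
  assumes "fsupp N y"
  shows "(\<Sum>k\<in>{-int N..int N}. x k * y k) = (\<Sum>\<^sub>\<infinity>k. x k * y k)"
  by (rule infsum_fin[symmetric]) (use fsuppD[OF assms] in auto)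

lemma l2_inner_box:
  assumes "fsupp N x"
  shows "l2_inner x y = 2 * complex_of_real pi * (\<Sum>k\<in>{-int N..int N}. x k * cnj (y k))"
  unfolding l2_inner_def sum_box_infsum[OF assms] ..

lemma const_from_deriv:
  assumes "\<And>\<tau>. ((\<lambda>\<tau>. G \<tau>) has_vector_derivative 0) (at \<tau> within UNIV)"
  shows "G t = (G s :: complex)"
proof -
  obtain c where "\<And>x. x \<in> UNIV \<Longrightarrow> G x = c"
    by (rule has_vector_derivative_zero_constant[of UNIV G]) (use assms in auto)
  then show ?thesis by simp
qed

lemma trig1:
  assumes a: "fsupp N a" "a 0 = 0" "real_valued_seq a"
  shows "l2_inner a (Xts t s a a) = 0"
proof -
  define H where "H \<tau> = (\<Sum>k\<in>{-int N..int N}. a k * cnj (Xts \<tau> s a a k))" for \<tau>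
  have "((\<lambda>\<tau>. H \<tau>) has_vector_derivative 0) (at \<tau> within UNIV)" for \<tau>
  proof -
    have d: "((\<lambda>\<tau>. H \<tau>) has_vector_derivative (\<Sum>k\<in>{-int N..int N}. a k * cnj (Xdot \<tau> a a k))) (at \<tau> within UNIV)"
      unfolding H_def
      by (intro has_vector_derivative_sum has_vector_derivative_mult_right has_vector_derivative_cnj
            Xts_deriv[where b=a and c=a, OF a(1,2,2)])
    define L where "L = (\<Sum>\<^sub>\<infinity>k. a k * cnj (Xdot \<tau> a a k))"
    have "L = -(1/2) * (\<Sum>\<^sub>\<infinity>k. Xdot \<tau> a a k * cnj (a k))"
      unfolding L_def by (rule P4[OF a a])
    also have "(\<Sum>\<^sub>\<infinity>k. Xdot \<tau> a a k * cnj (a k)) = cnj L"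
      unfolding L_def by (rule cnj_sum_swap[symmetric])
    also have "cnj L = L"
      unfolding L_def by (rule cnj_sum_real[OF a(3) rv_Xdot[OF a(2) a(2) a(3) a(3)]])
    finally have e: "L = -(1/2) * L" .
    have "L = 0"
    proof -
      have r: "Re L = 0" using arg_cong[OF e, of Re] by auto
      have i: "Im L = 0" using arg_cong[OF e, of Im] by auto
      show ?thesis using r i complex_eq_iff by auto
    qed
    then show ?thesis using d unfolding L_def sum_box_infsum[OF a(1)] by simp
  qed
  then have "H t = H s" by (rule const_from_deriv)
  then have "H t = 0" by (simp add: H_def)
  then show ?thesis unfolding l2_inner_box[OF a(1)] H_def by simp
qed

lemma trig2:
  assumes a: "fsupp N a" "a 0 = 0" "real_valued_seq a"
  shows "2 * l2_inner a (X2_trig t s a a a) + l2_inner (Xts t s a a) (Xts t s a a) = 0"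
proof -
  have fX: "fsupp (N+N) (Xts \<tau> s a a)" for \<tau> by (rule fsupp_Xts[OF a(1) a(1)])
  have fD: "fsupp (N+N) (Xdot \<tau> a a)" for \<tau> by (rule fsupp_Xdot[OF a(1) a(1)])
  define G where "G \<tau> = 2 * (\<Sum>k\<in>{-int N..int N}. a k * cnj (X2_trig \<tau> s a a a k))
     + (\<Sum>k\<in>{-int (N+N)..int (N+N)}. Xts \<tau> s a a k * cnj (Xts \<tau> s a a k))" for \<tau>
  have "((\<lambda>\<tau>. G \<tau>) has_vector_derivative 0) (at \<tau> within UNIV)" for \<tau>
  proof -
    define \<psi> where "\<psi> = Xts \<tau> s a a"
    have d: "((\<lambda>\<tau>. G \<tau>) has_vector_derivative
       2 * (\<Sum>k\<in>{-int N..int N}. a k * cnj (2 * Xdot \<tau> a (Xts \<tau> s a a) k))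
       + (\<Sum>k\<in>{-int (N+N)..int (N+N)}. Xts \<tau> s a a k * cnj (Xdot \<tau> a a k) + Xdot \<tau> a a k * cnj (Xts \<tau> s a a k)))
       (at \<tau> within UNIV)"
      unfolding G_def
      by (intro has_vector_derivative_add has_vector_derivative_sum has_vector_derivative_mult_right
            has_vector_derivative_mult has_vector_derivative_cnj
            Xts_deriv[where b=a and c=a, OF a(1,2,2)] X2_trig_deriv[where a=a and b=a and c=a, OF a(1,2) a(1,2) a(1,2)])
    have p: "fsupp (N+N) \<psi>" "\<psi> 0 = 0" "real_valued_seq \<psi>"
      unfolding \<psi>_def using fX apply simp apply simp
      by (rule rv_Xts[OF a(2) a(2) a(3) a(3)])
    define Q where "Q = (\<Sum>\<^sub>\<infinity>k. Xdot \<tau> a a k * cnj (\<psi> k))"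
    have Qr: "cnj Q = Q"
      unfolding Q_def by (rule cnj_sum_real[OF rv_Xdot[OF a(2) a(2) a(3) a(3)] p(3)])
    have s1: "(\<Sum>k\<in>{-int N..int N}. a k * cnj (2 * Xdot \<tau> a (Xts \<tau> s a a) k)) = - Q"
    proof -
      have "(\<Sum>k\<in>{-int N..int N}. a k * cnj (2 * Xdot \<tau> a (Xts \<tau> s a a) k)) = 2 * (\<Sum>k\<in>{-int N..int N}. a k * cnj (Xdot \<tau> a \<psi> k))"
        by (simp add: sum_distrib_left \<psi>_def mult_ac)
      also have "\<dots> = 2 * (\<Sum>\<^sub>\<infinity>k. a k * cnj (Xdot \<tau> a \<psi> k))"
        unfolding sum_box_infsum[OF a(1)] ..
      also have "\<dots> = - Q"
        unfolding Q_def P4[OF a p] by simp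
      finally show ?thesis .
    qed
    have s2: "(\<Sum>k\<in>{-int (N+N)..int (N+N)}. Xts \<tau> s a a k * cnj (Xdot \<tau> a a k) + Xdot \<tau> a a k * cnj (Xts \<tau> s a a k)) = 2 * Q"
    proof -
      have "(\<Sum>k\<in>{-int (N+N)..int (N+N)}. Xts \<tau> s a a k * cnj (Xdot \<tau> a a k) + Xdot \<tau> a a k * cnj (Xts \<tau> s a a k))
        = (\<Sum>k\<in>{-int (N+N)..int (N+N)}. \<psi> k * cnj (Xdot \<tau> a a k)) + (\<Sum>k\<in>{-int (N+N)..int (N+N)}. Xdot \<tau> a a k * cnj (\<psi> k))"
        by (simp add: sum.distrib \<psi>_def)
      also have "\<dots> = (\<Sum>\<^sub>\<infinity>k. \<psi> k * cnj (Xdot \<tau> a a k)) + Q"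
        unfolding Q_def sum_box_infsum[OF p(1)] sum_box_infsum[OF fD] ..
      also have "(\<Sum>\<^sub>\<infinity>k. \<psi> k * cnj (Xdot \<tau> a a k)) = cnj Q"
        unfolding Q_def by (rule cnj_sum_swap[symmetric])
      finally show ?thesis using Qr by simp
    qed
    show ?thesis using d unfolding s1 s2 by simp
  qed
  then have "G t = G s" by (rule const_from_deriv)
  also have "G s = 0"
    unfolding G_def by (simp add: X2_trig_same[where a=a and b=a and c=a, OF a(1,2) a(1,2) a(1,2)])
  finally have G0: "G t = 0" .
  have "2 * l2_inner a (X2_trig t s a a a) + l2_inner (Xts t s a a) (Xts t s a a) = 2 * complex_of_real pi * G t"
    unfolding l2_inner_box[OF a(1)] l2_inner_box[OF fX] G_def by (simp add: algebra_simps)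
  then show ?thesis using G0 by simp
qed


lemma norm_ee_diff: "norm (ee x t - ee x s) \<le> 2"
  using norm_triangle_ineq4[of "ee x t" "ee x s"] by simp

lemma Ph_diff_bound:
  "norm (Ph A t - Ph A s) \<le> (if A = 0 then \<bar>t - s\<bar> else 2 / (3 * \<bar>real_of_int A\<bar>))"
proof (cases "A = 0")
  case True
  then show ?thesis by (simp add: Ph_def flip: of_real_diff)
next
  case False
  have "Ph A t - Ph A s = (ee A t - ee A s) / (- 3 * \<i> * of_int A)"
    using False by (simp add: Ph_def diff_divide_distrib)
  then have "norm (Ph A t - Ph A s) = norm (ee A t - ee A s) / (3 * \<bar>real_of_int A\<bar>)"
    by (simp add: norm_divide norm_mult)
  also have "\<dots> \<le> 2 / (3 * \<bar>real_of_int A\<bar>)"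
    using False by (intro divide_right_mono norm_ee_diff) auto
  finally show ?thesis using False by simp
qed

lemma int_abs_ge1: "(x::int) \<noteq> 0 \<Longrightarrow> 1 \<le> \<bar>real_of_int x\<bar>"
  by linarith

lemma ge1_prod:
  fixes x y z :: real
  assumes "1 \<le> x" "1 \<le> y" "1 \<le> z"
  shows "x \<le> x*y*z \<and> y \<le> x*y*z \<and> z \<le> x*y*z"
proof -
  have yz: "1 \<le> y*z" using assms by (metis mult_mono' mult_1 zero_le_one)
  have xz: "1 \<le> x*z" using assms by (metis mult_mono' mult_1 zero_le_one)
  have xy: "1 \<le> x*y" using assms by (metis mult_mono' mult_1 zero_le_one)
  have "x * 1 \<le> x * (y*z)" using yz assms by (intro mult_left_mono) auto
  moreover have "y * 1 \<le> y * (x*z)" using xz assms by (intro mult_left_mono) auto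
  moreover have "z * 1 \<le> z * (x*y)" using xy assms by (intro mult_left_mono) auto
  ultimately show ?thesis by (simp add: mult_ac)
qed

lemma final_alg:
  fixes P X :: real
  assumes "0 < P" "0 \<le> X"
  shows "(2/3 + (1 + X)) / (12 * P) \<le> 1 / P + X / P"
proof -
  have "(2/3 + (1 + X)) / (12 * P) = (5/3 + X) / 12 / P" by (simp add: field_simps)
  also have "\<dots> \<le> (1 + X) / P" using assms by (intro divide_right_mono) auto
  also have "\<dots> = 1 / P + X / P" by (simp add: add_divide_distrib)
  finally show ?thesis .
qed

lemma Kf_bound:
  fixes k k1 k2 :: int
  assumes k1: "k1 \<noteq> 0" and k2: "k2 \<noteq> 0" and k3: "k - k1 - k2 \<noteq> 0"
  shows "norm (Kf t s k k1 k2) \<le> 1 / (\<bar>real_of_int k2\<bar> * \<bar>real_of_int (k-k1-k2)\<bar>)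
     + \<bar>t - s\<bar> * ((if k1 + k2 = 0 then 1 / \<bar>real_of_int k2\<bar> else 0) + (if k - k2 = 0 then 1 / \<bar>real_of_int (k-k1-k2)\<bar> else 0))"
    (is "_ \<le> ?R")
proof -
  define m where "m = k - k1"
  define k3 where "k3 = k - k1 - k2"
  define A1 where "A1 = k*k1*(k-k1)"
  define A2 where "A2 = k*k1*(k-k1) + (k-k1)*k2*(k-k1-k2)"
  define D1 where "D1 = Ph A1 t - Ph A1 s"
  define D2 where "D2 = Ph A2 t - Ph A2 s"
  have R0: "0 \<le> \<bar>t - s\<bar> * ((if k1 + k2 = 0 then 1 / \<bar>real_of_int k2\<bar> else 0) + (if k - k2 = 0 then 1 / \<bar>real_of_int (k-k1-k2)\<bar> else 0))"
    by auto
  have R1: "0 \<le> 1 / (\<bar>real_of_int k2\<bar> * \<bar>real_of_int (k-k1-k2)\<bar>)" by auto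
  show ?thesis
  proof (cases "k = 0 \<or> m = 0")
    case True
    then have "Kf t s k k1 k2 = 0"
      unfolding Kf_def m_def by auto
    then show ?thesis using R0 R1 by simp
  next
    case False
    then have k0: "k \<noteq> 0" and m0: "m \<noteq> 0" by auto
    have K2: "1 \<le> \<bar>real_of_int k2\<bar>" and K3: "1 \<le> \<bar>real_of_int k3\<bar>" and K1: "1 \<le> \<bar>real_of_int k1\<bar>"
      and M1: "1 \<le> \<bar>real_of_int m\<bar>" and K0: "1 \<le> \<bar>real_of_int k\<bar>"
      using k1 k2 k3 k0 m0 by (auto simp: k3_def intro!: int_abs_ge1)
    have nK: "norm (Kf t s k k1 k2) = \<bar>real_of_int k\<bar> / (12 * \<bar>real_of_int k2\<bar> * \<bar>real_of_int k3\<bar>) * norm (ee (m*k2*k3) s * D1 - D2)"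
    proof -
      have e: "Kf t s k k1 k2 = (\<i> * of_int k / 2) / of_int (6 * k2 * k3) * (ee (m*k2*k3) s * D1 - D2)"
        unfolding Kf_def D1_def D2_def A1_def A2_def m_def k3_def ..
      have n1: "norm (\<i> * of_int k / 2 :: complex) = \<bar>real_of_int k\<bar> / 2" by (simp add: norm_mult norm_divide)
      have n2: "norm (of_int (6*k2*k3) :: complex) = 6 * \<bar>real_of_int k2\<bar> * \<bar>real_of_int k3\<bar>"
        by (simp only: norm_of_int) (simp add: abs_mult)
      show ?thesis unfolding e norm_mult norm_divide n1 n2 by (simp add: field_simps)
    qed
    have nE: "norm (ee (m*k2*k3) s * D1 - D2) \<le> norm D1 + norm D2"
      using norm_triangle_ineq4[of "ee (m*k2*k3) s * D1" D2] by (simp add: norm_mult)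
    have A1nz: "A1 \<noteq> 0" using k0 k1 m0 by (simp add: A1_def m_def)
    have b1: "\<bar>real_of_int k\<bar> * norm D1 \<le> 2/3"
    proof -
      have "norm D1 \<le> 2 / (3 * \<bar>real_of_int A1\<bar>)" using Ph_diff_bound[of A1 t s] A1nz by (simp add: D1_def)
      also have "\<bar>real_of_int A1\<bar> = \<bar>real_of_int k\<bar> * (\<bar>real_of_int k1\<bar> * \<bar>real_of_int m\<bar>)"
        by (simp add: A1_def m_def abs_mult)
      finally have "\<bar>real_of_int k\<bar> * norm D1 \<le> \<bar>real_of_int k\<bar> * (2 / (3 * (\<bar>real_of_int k\<bar> * (\<bar>real_of_int k1\<bar> * \<bar>real_of_int m\<bar>))))"
        using K0 by (intro mult_left_mono) auto
      also have "\<dots> = 2 / (3 * (\<bar>real_of_int k1\<bar> * \<bar>real_of_int m\<bar>))" using K0 by (simp add: field_simps)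
      also have "\<dots> \<le> 2 / 3"
      proof -
        have "1 \<le> \<bar>real_of_int k1\<bar> * \<bar>real_of_int m\<bar>" using K1 M1 by (metis mult_mono' mult_1 zero_le_one)
        then show ?thesis by (simp add: field_simps)
      qed
      finally show ?thesis .
    qed
    have A2eq: "A2 = m * (k1 + k2) * (k - k2)" by (simp add: A2_def m_def algebra_simps)
    have b2: "\<bar>real_of_int k\<bar> * norm D2 \<le> 1 + (if A2 = 0 then \<bar>t - s\<bar> * \<bar>real_of_int k\<bar> else 0)"
    proof (cases "A2 = 0")
      case True
      have "norm D2 \<le> \<bar>t - s\<bar>" using Ph_diff_bound[of A2 t s] True by (simp add: D2_def)
      then have "\<bar>real_of_int k\<bar> * norm D2 \<le> \<bar>real_of_int k\<bar> * \<bar>t - s\<bar>" by (intro mult_left_mono) auto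
      then show ?thesis using True by (simp add: mult.commute)
    next
      case False
      then have p0: "k1 + k2 \<noteq> 0" and q0: "k - k2 \<noteq> 0" by (auto simp: A2eq)
      have P1: "1 \<le> \<bar>real_of_int (k1+k2)\<bar>" and Q1: "1 \<le> \<bar>real_of_int (k-k2)\<bar>"
        using p0 q0 by (auto intro!: int_abs_ge1)
      have "norm D2 \<le> 2 / (3 * \<bar>real_of_int A2\<bar>)" using Ph_diff_bound[of A2 t s] False by (simp add: D2_def)
      have absA2: "\<bar>real_of_int A2\<bar> = \<bar>real_of_int m\<bar> * \<bar>real_of_int (k1+k2)\<bar> * \<bar>real_of_int (k-k2)\<bar>"
        by (simp add: A2eq abs_mult)
      have "2 * \<bar>real_of_int k\<bar> \<le> \<bar>real_of_int m\<bar> + \<bar>real_of_int (k1+k2)\<bar> + \<bar>real_of_int (k-k2)\<bar>"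
        by (simp add: m_def)
      also have "\<dots> \<le> 3 * \<bar>real_of_int A2\<bar>"
      proof -
        let ?m = "\<bar>real_of_int m\<bar>" and ?p = "\<bar>real_of_int (k1+k2)\<bar>" and ?q = "\<bar>real_of_int (k-k2)\<bar>"
        have "?m \<le> ?m * ?p * ?q" "?p \<le> ?m * ?p * ?q" "?q \<le> ?m * ?p * ?q"
          using ge1_prod[OF M1 P1 Q1] by auto
        then show ?thesis unfolding absA2 by linarith
      qed
      finally have "2 * \<bar>real_of_int k\<bar> \<le> 3 * \<bar>real_of_int A2\<bar>" .
      then have "\<bar>real_of_int k\<bar> * (2 / (3 * \<bar>real_of_int A2\<bar>)) \<le> 1"
        using False by (simp add: field_simps)
      moreover have "\<bar>real_of_int k\<bar> * norm D2 \<le> \<bar>real_of_int k\<bar> * (2 / (3 * \<bar>real_of_int A2\<bar>))"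
        using \<open>norm D2 \<le> _\<close> by (intro mult_left_mono) auto
      ultimately have "\<bar>real_of_int k\<bar> * norm D2 \<le> 1" by linarith
      then show ?thesis using False by simp
    qed
    have b3: "(if A2 = 0 then \<bar>t - s\<bar> * \<bar>real_of_int k\<bar> else 0) / (\<bar>real_of_int k2\<bar> * \<bar>real_of_int k3\<bar>)
       \<le> \<bar>t - s\<bar> * ((if k1 + k2 = 0 then 1 / \<bar>real_of_int k2\<bar> else 0) + (if k - k2 = 0 then 1 / \<bar>real_of_int (k-k1-k2)\<bar> else 0))"
    proof (cases "A2 = 0")
      case False then show ?thesis using R0 by simp
    next
      case True
      then have "k1 + k2 = 0 \<or> k - k2 = 0" using m0 by (simp add: A2eq)
      then show ?thesis
      proof
        assume p: "k1 + k2 = 0"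
        then have "k3 = k" by (simp add: k3_def)
        then have e: "(\<bar>t - s\<bar> * \<bar>real_of_int k\<bar>) / (\<bar>real_of_int k2\<bar> * \<bar>real_of_int k3\<bar>) = \<bar>t - s\<bar> * (1 / \<bar>real_of_int k2\<bar>)"
          using K0 k0 by (simp add: field_simps)
        have nn: "0 \<le> (if k - k2 = 0 then 1 / \<bar>real_of_int (k-k1-k2)\<bar> else 0)" by auto
        have "\<bar>t - s\<bar> * (1 / \<bar>real_of_int k2\<bar>) \<le> \<bar>t - s\<bar> * ((if k1 + k2 = 0 then 1 / \<bar>real_of_int k2\<bar> else 0) + (if k - k2 = 0 then 1 / \<bar>real_of_int (k-k1-k2)\<bar> else 0))"
          using p nn by (intro mult_left_mono) auto
        then show ?thesis using True e by simp
      next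
        assume q: "k - k2 = 0"
        then have "k2 = k" by simp
        then have e: "(\<bar>t - s\<bar> * \<bar>real_of_int k\<bar>) / (\<bar>real_of_int k2\<bar> * \<bar>real_of_int k3\<bar>) = \<bar>t - s\<bar> * (1 / \<bar>real_of_int k3\<bar>)"
          using K0 k0 by (simp add: field_simps)
        have nn: "0 \<le> (if k1 + k2 = 0 then 1 / \<bar>real_of_int k2\<bar> else 0)" by auto
        have "\<bar>t - s\<bar> * (1 / \<bar>real_of_int k3\<bar>) \<le> \<bar>t - s\<bar> * ((if k1 + k2 = 0 then 1 / \<bar>real_of_int k2\<bar> else 0) + (if k - k2 = 0 then 1 / \<bar>real_of_int (k-k1-k2)\<bar> else 0))"
          using q nn by (intro mult_left_mono) (auto simp: k3_def)
        then show ?thesis using True e by simp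
      qed
    qed
    have "norm (Kf t s k k1 k2) \<le> \<bar>real_of_int k\<bar> / (12 * \<bar>real_of_int k2\<bar> * \<bar>real_of_int k3\<bar>) * (norm D1 + norm D2)"
      unfolding nK using K2 K3 by (intro mult_left_mono nE) auto
    also have "\<dots> = (\<bar>real_of_int k\<bar> * norm D1 + \<bar>real_of_int k\<bar> * norm D2) / (12 * (\<bar>real_of_int k2\<bar> * \<bar>real_of_int k3\<bar>))"
      by (simp add: field_simps)
    also have "\<dots> \<le> (2/3 + (1 + (if A2 = 0 then \<bar>t - s\<bar> * \<bar>real_of_int k\<bar> else 0))) / (12 * (\<bar>real_of_int k2\<bar> * \<bar>real_of_int k3\<bar>))"
      using K2 K3 b1 b2 by (intro divide_right_mono) auto
    also have "\<dots> \<le> 1 / (\<bar>real_of_int k2\<bar> * \<bar>real_of_int k3\<bar>) + (if A2 = 0 then \<bar>t - s\<bar> * \<bar>real_of_int k\<bar> else 0) / (\<bar>real_of_int k2\<bar> * \<bar>real_of_int k3\<bar>)"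
    proof -
      have pos: "0 < \<bar>real_of_int k2\<bar> * \<bar>real_of_int k3\<bar>" using K2 K3 by (auto intro: mult_pos_pos)
      have nn: "0 \<le> (if A2 = 0 then \<bar>t - s\<bar> * \<bar>real_of_int k\<bar> else 0)" by auto
      show ?thesis using final_alg[OF pos nn] .
    qed
    also have "\<dots> \<le> ?R" using b3 by (simp add: k3_def)
    finally show ?thesis .
  qed
qed


lemma single_le_infsum:
  fixes f :: "'a \<Rightarrow> real"
  assumes "f summable_on A" "\<And>x. x \<in> A \<Longrightarrow> 0 \<le> f x" "i \<in> A"
  shows "f i \<le> infsum f A"
  using finite_sum_le_infsum[OF assms(1), of "{i}"] assms by auto

lemma tensor_summable:
  fixes x :: "'a \<Rightarrow> real" and y :: "'b \<Rightarrow> real"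
  assumes sx: "x summable_on A" and sy: "y summable_on B"
    and x0: "\<And>a. 0 \<le> x a" and y0: "\<And>b. 0 \<le> y b"
  shows "(\<lambda>(a,b). x a * y b) summable_on (A \<times> B)"
    and "(\<Sum>\<^sub>\<infinity>(a,b)\<in>A \<times> B. x a * y b) = infsum x A * infsum y B"
proof -
  show S: "(\<lambda>(a,b). x a * y b) summable_on (A \<times> B)"
  proof (rule nonneg_bdd_above_summable_on)
    show "\<And>z. z \<in> A \<times> B \<Longrightarrow> 0 \<le> (case z of (a, b) \<Rightarrow> x a * y b)" using x0 y0 by auto
    show "bdd_above (sum (\<lambda>(a,b). x a * y b) ` {F. F \<subseteq> A \<times> B \<and> finite F})"
    proof (rule bdd_aboveI2)
      fix F assume F: "F \<in> {F. F \<subseteq> A \<times> B \<and> finite F}"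
      then have fin: "finite F" and sub: "F \<subseteq> A \<times> B" by auto
      have "sum (\<lambda>(a,b). x a * y b) F \<le> sum (\<lambda>(a,b). x a * y b) (fst ` F \<times> snd ` F)"
      proof (rule sum_mono2)
        show "finite (fst ` F \<times> snd ` F)" using fin by simp
        show "F \<subseteq> fst ` F \<times> snd ` F" by force
      qed (use x0 y0 in auto)
      also have "\<dots> = sum x (fst ` F) * sum y (snd ` F)"
        by (simp add: sum_product sum.cartesian_product)
      also have "\<dots> \<le> infsum x A * infsum y B"
      proof (rule mult_mono)
        show "sum x (fst ` F) \<le> infsum x A"
          by (rule finite_sum_le_infsum[OF sx]) (use fin sub x0 in auto)
        show "sum y (snd ` F) \<le> infsum y B"
          by (rule finite_sum_le_infsum[OF sy]) (use fin sub y0 in auto)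
        show "0 \<le> infsum x A" using x0 by (intro infsum_nonneg) auto
        show "0 \<le> sum y (snd ` F)" using y0 by (intro sum_nonneg) auto
      qed
      finally show "sum (\<lambda>(a,b). x a * y b) F \<le> infsum x A * infsum y B" .
    qed
  qed
  have "(\<Sum>\<^sub>\<infinity>(a,b)\<in>A \<times> B. x a * y b) = (\<Sum>\<^sub>\<infinity>a\<in>A. \<Sum>\<^sub>\<infinity>b\<in>B. x a * y b)"
    using infsum_Sigma'_banach[of "\<lambda>a b. x a * y b" A "\<lambda>_. B"] S by simp
  also have "\<dots> = (\<Sum>\<^sub>\<infinity>a\<in>A. x a * infsum y B)"
    by (simp add: infsum_cmult_right')
  also have "\<dots> = infsum x A * infsum y B"
    by (simp add: infsum_cmult_left')
  finally show "(\<Sum>\<^sub>\<infinity>(a,b)\<in>A \<times> B. x a * y b) = infsum x A * infsum y B" .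
qed

lemma infsum_CS:
  fixes a b :: "'a \<Rightarrow> real"
  assumes a0: "\<And>i. 0 \<le> a i" and b0: "\<And>i. 0 \<le> b i"
    and sa: "a summable_on I" and sab: "(\<lambda>i. a i * (b i)\<^sup>2) summable_on I"
  shows "(\<lambda>i. a i * b i) summable_on I"
    and "(\<Sum>\<^sub>\<infinity>i\<in>I. a i * b i)\<^sup>2 \<le> (\<Sum>\<^sub>\<infinity>i\<in>I. a i) * (\<Sum>\<^sub>\<infinity>i\<in>I. a i * (b i)\<^sup>2)"
proof -
  have s1: "(\<lambda>i. a i + a i * (b i)\<^sup>2) summable_on I" by (rule summable_on_add[OF sa sab])
  show S: "(\<lambda>i. a i * b i) summable_on I"
  proof (rule summable_on_comparison_test[OF s1])
    fix i
    have "b i \<le> 1 + (b i)\<^sup>2" by (smt (verit) b0 power2_eq_square mult_le_cancel_left1 not_sum_power2_lt_zero)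
    then have "a i * b i \<le> a i * (1 + (b i)\<^sup>2)" using a0 by (intro mult_left_mono) auto
    then show "a i * b i \<le> a i + a i * (b i)\<^sup>2" by (simp add: algebra_simps)
    show "0 \<le> a i * b i" using a0 b0 by simp
  qed
  define A where "A = (\<Sum>\<^sub>\<infinity>i\<in>I. a i)"
  define S where "S = (\<Sum>\<^sub>\<infinity>i\<in>I. a i * b i)"
  define B where "B = (\<Sum>\<^sub>\<infinity>i\<in>I. a i * (b i)\<^sup>2)"
  show "S\<^sup>2 \<le> A * B" unfolding S_def[symmetric] A_def[symmetric] B_def[symmetric]
  proof (cases "A = 0")
    case True
    have "a i = 0" if "i \<in> I" for i
      using single_le_infsum[OF sa _ that] a0 True unfolding A_def by (metis order_antisym)
    then have "S = 0" unfolding S_def by (simp add: infsum_0)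
    then show ?thesis using True by simp
  next
    case False
    then have Ap: "A > 0" using a0 unfolding A_def by (metis infsum_nonneg order_less_le)
    define c where "c = S / A"
    have e: "(\<Sum>\<^sub>\<infinity>i\<in>I. a i * (b i)\<^sup>2 + (- (2*c) * (a i * b i) + c\<^sup>2 * a i)) = B + (- (2*c) * S + c\<^sup>2 * A)"
    proof -
      have s2: "(\<lambda>i. - (2*c) * (a i * b i) + c\<^sup>2 * a i) summable_on I"
        by (intro summable_on_add summable_on_cmult_right S sa)
      have e1: "(\<Sum>\<^sub>\<infinity>i\<in>I. - (2*c) * (a i * b i) + c\<^sup>2 * a i) = (\<Sum>\<^sub>\<infinity>i\<in>I. - (2*c) * (a i * b i)) + (\<Sum>\<^sub>\<infinity>i\<in>I. c\<^sup>2 * a i)"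
        by (rule infsum_add) (intro summable_on_cmult_right S sa)+
      have e2: "(\<Sum>\<^sub>\<infinity>i\<in>I. a i * (b i)\<^sup>2 + (- (2*c) * (a i * b i) + c\<^sup>2 * a i)) = B + (\<Sum>\<^sub>\<infinity>i\<in>I. - (2*c) * (a i * b i) + c\<^sup>2 * a i)"
        unfolding B_def by (rule infsum_add[OF sab s2])
      show ?thesis unfolding e2 e1 A_def S_def by (simp only: infsum_cmult_right')
    qed
    have "0 \<le> (\<Sum>\<^sub>\<infinity>i\<in>I. a i * (b i)\<^sup>2 + (- (2*c) * (a i * b i) + c\<^sup>2 * a i))"
    proof (rule infsum_nonneg)
      fix i
      have "a i * (b i)\<^sup>2 + (- (2*c) * (a i * b i) + c\<^sup>2 * a i) = a i * (b i - c)\<^sup>2"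
        by (simp add: power2_eq_square algebra_simps)
      then show "0 \<le> a i * (b i)\<^sup>2 + (- (2*c) * (a i * b i) + c\<^sup>2 * a i)" using a0 by simp
    qed
    then have "0 \<le> B + (- (2*c) * S + c\<^sup>2 * A)" by (simp only: e)
    then have "0 \<le> B - S\<^sup>2 / A" unfolding c_def using Ap by (simp add: power2_eq_square field_simps)
    then show ?thesis using Ap by (simp add: field_simps)
  qed
qed

lemma summable_inv_sq_int: "(\<lambda>k::int. 1 / (real_of_int k)\<^sup>2) summable_on UNIV"
proof -
  have sn: "(\<lambda>n::nat. 1 / (real n)\<^sup>2) summable_on UNIV"
  proof -
    have "summable (\<lambda>n::nat. inverse (real n ^ 2))" by (rule inverse_power_summable) simp
    then show ?thesis by (subst summable_on_UNIV_nonneg_real_iff) (auto simp: divide_inverse)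
  qed
  have s1: "(\<lambda>k::int. 1 / (real_of_int k)\<^sup>2) summable_on (int ` UNIV)"
    by (subst summable_on_reindex) (auto simp: o_def sn)
  have s2: "(\<lambda>k::int. 1 / (real_of_int k)\<^sup>2) summable_on ((\<lambda>n. - int n) ` UNIV)"
    by (subst summable_on_reindex) (auto simp: o_def sn inj_on_def)
  have "UNIV = int ` UNIV \<union> (\<lambda>n. - int n) ` UNIV"
  proof (rule set_eqI)
    fix k :: int
    show "k \<in> UNIV \<longleftrightarrow> k \<in> int ` UNIV \<union> (\<lambda>n. - int n) ` UNIV"
    proof (cases "k \<ge> 0")
      case True then show ?thesis by (auto intro: image_eqI[where x="nat k"])
    next
      case False then show ?thesis by (auto intro!: image_eqI[where x="nat (-k)"])
    qed
  qed
  then show ?thesis using summable_on_union[OF s1 s2] by simp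
qed

lemma dom_summable:
  fixes f :: "'a \<Rightarrow> 'b::banach" and g :: "'a \<Rightarrow> real"
  assumes "g summable_on A" "\<And>x. x \<in> A \<Longrightarrow> norm (f x) \<le> g x"
  shows "f summable_on A" and "norm (infsum f A) \<le> infsum g A"
proof -
  have n: "(\<lambda>x. norm (f x)) summable_on A" by (rule Infinite_Sum.abs_summable_on_comparison_test'[OF assms])
  then show "f summable_on A" by (rule abs_summable_summable)
  have "norm (infsum f A) \<le> infsum (\<lambda>x. norm (f x)) A" by (rule norm_infsum_bound[OF n])
  also have "\<dots> \<le> infsum g A" by (rule infsum_mono[OF n assms(1)]) (use assms(2) in auto)
  finally show "norm (infsum f A) \<le> infsum g A" .
qed


lemma trunc_fsupp: "fsupp N (trunc N a)" unfolding fsupp_def trunc_def by auto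
lemma trunc_0: "a 0 = 0 \<Longrightarrow> trunc N a 0 = 0" unfolding trunc_def by auto
lemma trunc_rv: "real_valued_seq a \<Longrightarrow> real_valued_seq (trunc N a)"
  unfolding real_valued_seq_def trunc_def by auto
lemma trunc_norm: "norm (trunc N a k) \<le> norm (a k)" unfolding trunc_def by auto
lemma trunc_lim: "(\<lambda>N. trunc N a k) \<longlonglongrightarrow> a k"
proof (rule tendsto_eventually)
  show "\<forall>\<^sub>F N in sequentially. trunc N a k = a k"
    unfolding eventually_sequentially trunc_def by (rule exI[of _ "nat \<bar>k\<bar>"]) auto
qed

lemma half_le: "2 * a \<le> b \<Longrightarrow> a \<le> b / (2::real)" by linarith

lemma le_1_sq: "0 \<le> x \<Longrightarrow> x \<le> 1 + x\<^sup>2" for x :: real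
proof (cases "x \<le> 1")
  case True then show ?thesis by (smt (verit) zero_le_power2)
next
  case False
  then have "x * 1 \<le> x * x" by (intro mult_left_mono) auto
  then show ?thesis by (simp add: power2_eq_square)
qed

lemma sqrt_bound: "x / \<bar>real_of_int k\<bar> \<le> (x\<^sup>2 + 1 / (real_of_int k)\<^sup>2) / 2" if "0 \<le> x" for x :: real
proof (cases "k = 0")
  case True then show ?thesis using that by simp
next
  case False
  let ?y = "1 / \<bar>real_of_int k\<bar>"
  have "x / \<bar>real_of_int k\<bar> = x * ?y" by simp
  also have "\<dots> \<le> (x\<^sup>2 + ?y\<^sup>2) / 2"
  proof -
    have "2 * (x * ?y) \<le> x\<^sup>2 + ?y\<^sup>2" using sum_squares_bound[of x ?y] by (simp add: mult.assoc)
    then show ?thesis by (rule half_le)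
  qed
  also have "?y\<^sup>2 = 1 / (real_of_int k)\<^sup>2" by (simp add: power2_eq_square)
  finally show ?thesis .
qed

context
  fixes \<phi> :: "int \<Rightarrow> complex"
  assumes l2: "l2_seq \<phi>" and rv: "real_valued_seq \<phi>" and z: "\<phi> 0 = 0"
begin

definition "ff k = norm (\<phi> k)"
definition "uu k = norm (\<phi> k) / \<bar>real_of_int k\<bar>"

lemma ff0: "0 \<le> ff k" by (simp add: ff_def)
lemma uu0: "0 \<le> uu k" by (simp add: uu_def)

lemma ff2_summable: "(\<lambda>k. (ff k)\<^sup>2) summable_on UNIV"
  using l2 unfolding l2_seq_def ff_def .

lemma uu_summable: "uu summable_on UNIV"
proof (rule summable_on_comparison_test)
  show "(\<lambda>k. (1/2) * ((ff k)\<^sup>2 + 1 / (real_of_int k)\<^sup>2)) summable_on UNIV"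
    by (intro summable_on_cmult_right summable_on_add ff2_summable summable_inv_sq_int)
  show "uu k \<le> (1/2) * ((ff k)\<^sup>2 + 1 / (real_of_int k)\<^sup>2)" for k
    using sqrt_bound[of "norm (\<phi> k)" k] unfolding uu_def ff_def by simp
  show "0 \<le> uu k" for k by (rule uu0)
qed

definition "UU = infsum uu UNIV"
definition "F2 = infsum (\<lambda>k. (ff k)\<^sup>2) UNIV"

lemma uu_le_UU: "uu k \<le> UU"
  unfolding UU_def by (rule single_le_infsum[OF uu_summable]) (auto simp: uu0)
lemma UU0: "0 \<le> UU" using uu_le_UU[of 0] uu0[of 0] by simp
lemma ff2_le: "(ff k)\<^sup>2 \<le> F2"
  unfolding F2_def by (rule single_le_infsum[OF ff2_summable]) auto
lemma F20: "0 \<le> F2" using ff2_le[of 0] zero_le_power2[of "ff 0"] by linarith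
lemma ff_le: "ff k \<le> 1 + F2"
proof -
  have "ff k \<le> 1 + (ff k)\<^sup>2" by (rule le_1_sq[OF ff0])
  then show ?thesis using ff2_le[of k] by simp
qed

lemma tensor_uu: "(\<lambda>(a,b). uu a * uu b) summable_on UNIV"
  using tensor_summable(1)[OF uu_summable uu_summable uu0 uu0] by simp

lemma tensor_uu_val: "(\<Sum>\<^sub>\<infinity>(a,b). uu a * uu b) = UU * UU"
  using tensor_summable(2)[OF uu_summable uu_summable uu0 uu0] by (simp add: UU_def)

definition "VV k k1 = uu k1 * uu (k - k1)"
definition "HH k = infsum (VV k) UNIV"

lemma VV0: "0 \<le> VV k k1" by (simp add: VV_def uu0)

lemma VV_summable: "VV k summable_on UNIV"
proof (rule summable_on_comparison_test)
  show "(\<lambda>k1. UU * uu k1) summable_on UNIV" by (intro summable_on_cmult_right uu_summable)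
  show "VV k k1 \<le> UU * uu k1" for k1
    unfolding VV_def using mult_left_mono[OF uu_le_UU[of "k-k1"] uu0[of k1]] by (simp add: mult.commute)
qed (rule VV0)

lemma HH0: "0 \<le> HH k" unfolding HH_def by (intro infsum_nonneg VV0)

lemma HH_le: "HH k \<le> UU * UU"
proof -
  have "HH k \<le> infsum (\<lambda>k1. UU * uu k1) UNIV"
    unfolding HH_def
  proof (rule infsum_mono[OF VV_summable])
    show "(\<lambda>k1. UU * uu k1) summable_on UNIV" by (intro summable_on_cmult_right uu_summable)
    show "VV k k1 \<le> UU * uu k1" for k1
      unfolding VV_def using mult_left_mono[OF uu_le_UU[of "k-k1"] uu0[of k1]] by (simp add: mult.commute)
  qed
  also have "\<dots> = UU * UU" by (simp add: infsum_cmult_right' UU_def)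
  finally show ?thesis .
qed

lemma bij_conv2: "bij_betw (\<lambda>(k::int,k1::int). (k1, k-k1)) UNIV UNIV"
  by (rule bij_betwI[where g="\<lambda>(a,b). (a+b,a)"]) auto

lemma HH_summable: "HH summable_on UNIV"
proof -
  have "(\<lambda>x. (\<lambda>(a,b). uu a * uu b) ((\<lambda>(k,k1). (k1, k-k1)) x)) summable_on UNIV"
    by (subst summable_on_reindex_bij_betw[OF bij_conv2]) (rule tensor_uu)
  then have "(\<lambda>(k,k1). VV k k1) summable_on (Sigma UNIV (\<lambda>_. UNIV))"
    by (simp add: VV_def case_prod_unfold)
  from summable_on_Sigma_banach[OF this] show ?thesis unfolding HH_def .
qed

lemma HH2_summable: "(\<lambda>k. (HH k)\<^sup>2) summable_on UNIV"
proof (rule summable_on_comparison_test)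
  show "(\<lambda>k. UU * UU * HH k) summable_on UNIV" by (intro summable_on_cmult_right HH_summable)
  show "(HH k)\<^sup>2 \<le> UU * UU * HH k" for k
    using HH_le[of k] HH0[of k] by (simp add: power2_eq_square mult_right_mono)
qed simp

lemma norm_cX: "norm (cX t s k k1) \<le> 1 / (3 * (\<bar>real_of_int k1\<bar> * \<bar>real_of_int (k - k1)\<bar>))"
proof -
  have "norm (cX t s k k1) = norm (ee (k*k1*(k-k1)) s - ee (k*k1*(k-k1)) t) / (6 * (\<bar>real_of_int k1\<bar> * \<bar>real_of_int (k - k1)\<bar>))"
    unfolding cX_def by (simp only: norm_divide norm_of_int) (simp add: abs_mult)
  also have "\<dots> \<le> 2 / (6 * (\<bar>real_of_int k1\<bar> * \<bar>real_of_int (k - k1)\<bar>))"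
    by (intro divide_right_mono norm_ee_diff) simp
  finally show ?thesis by simp
qed

lemma Xsummand_bound:
  assumes "\<And>j. norm (a j) \<le> norm (\<phi> j)"
  shows "norm (cX t s k k1 * a k1 * a (k - k1)) \<le> VV k k1"
proof (cases "k1 = 0 \<or> k - k1 = 0")
  case True
  then have "cX t s k k1 = 0" unfolding cX_def by auto
  then show ?thesis by (simp add: VV0)
next
  case False
  then have p1: "0 < \<bar>real_of_int k1\<bar>" and p2: "0 < \<bar>real_of_int (k - k1)\<bar>" by auto
  have "norm (cX t s k k1 * a k1 * a (k - k1)) \<le> 1 / (3 * (\<bar>real_of_int k1\<bar> * \<bar>real_of_int (k - k1)\<bar>)) * (norm (\<phi> k1) * norm (\<phi> (k-k1)))"
    unfolding norm_mult mult.assoc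
    by (intro mult_mono norm_cX assms) auto
  also have "\<dots> \<le> 1 / (\<bar>real_of_int k1\<bar> * \<bar>real_of_int (k - k1)\<bar>) * (norm (\<phi> k1) * norm (\<phi> (k-k1)))"
    using p1 p2 by (intro mult_right_mono divide_left_mono) (auto intro: mult_pos_pos)
  also have "\<dots> = VV k k1"
    unfolding VV_def uu_def using p1 p2 by (simp add: field_simps)
  finally show ?thesis .
qed


lemma X_repr: "a 0 = 0 \<Longrightarrow> Xts t s a a k = (\<Sum>\<^sub>\<infinity>k1. cX t s k k1 * a k1 * a (k - k1))"
  by (rule Xts_UNIV)

lemma X_bound:
  assumes "\<And>j. norm (a j) \<le> norm (\<phi> j)" "a 0 = 0"
  shows "norm (Xts t s a a k) \<le> HH k"
  unfolding X_repr[of a, OF assms(2)] HH_def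
  by (rule dom_summable(2)[OF VV_summable]) (rule Xsummand_bound[OF assms(1)])

lemma X_repr_trunc: "Xts t s (trunc N \<phi>) (trunc N \<phi>) k = (\<Sum>\<^sub>\<infinity>k1. cX t s k k1 * trunc N \<phi> k1 * trunc N \<phi> (k - k1))"
  by (rule X_repr[where a="trunc N \<phi>", OF trunc_0[where a=\<phi>, OF z]])

lemma X_conv: "(\<lambda>N. Xts t s (trunc N \<phi>) (trunc N \<phi>) k) \<longlonglongrightarrow> Xts t s \<phi> \<phi> k"
  unfolding X_repr_trunc X_repr[of \<phi>, OF z]
proof (rule infsum_dct[OF VV_summable])
  show "norm (cX t s k k1 * trunc N \<phi> k1 * trunc N \<phi> (k - k1)) \<le> VV k k1" for N k1
    by (rule Xsummand_bound[where a="trunc N \<phi>", OF trunc_norm])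
  show "(\<lambda>N. cX t s k k1 * trunc N \<phi> k1 * trunc N \<phi> (k - k1)) \<longlonglongrightarrow> cX t s k k1 * \<phi> k1 * \<phi> (k - k1)" for k1
    by (intro tendsto_mult tendsto_const trunc_lim)
qed

lemma prod_bound: "0 \<le> x \<Longrightarrow> 0 \<le> y \<Longrightarrow> x * y \<le> x\<^sup>2 + y\<^sup>2" for x y :: real
proof -
  have "2 * (x*y) \<le> x\<^sup>2 + y\<^sup>2" using sum_squares_bound[of x y] by (simp add: mult.assoc)
  moreover have "0 \<le> x\<^sup>2 + y\<^sup>2" by simp
  ultimately show ?thesis by linarith
qed


lemma inner1_conv: "(\<lambda>N. l2_inner (trunc N \<phi>) (Xts t s (trunc N \<phi>) (trunc N \<phi>))) \<longlonglongrightarrow> l2_inner \<phi> (Xts t s \<phi> \<phi>)"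
  unfolding l2_inner_def
proof (rule tendsto_mult[OF tendsto_const], rule infsum_dct)
  show "(\<lambda>k. (ff k)\<^sup>2 + (HH k)\<^sup>2) summable_on UNIV" by (intro summable_on_add ff2_summable HH2_summable)
  show "norm (trunc N \<phi> k * cnj (Xts t s (trunc N \<phi>) (trunc N \<phi>) k)) \<le> (ff k)\<^sup>2 + (HH k)\<^sup>2" for N k
  proof -
    have "norm (trunc N \<phi> k * cnj (Xts t s (trunc N \<phi>) (trunc N \<phi>) k)) \<le> ff k * HH k"
      unfolding norm_mult complex_mod_cnj ff_def
      by (rule mult_mono[OF trunc_norm X_bound[where a="trunc N \<phi>", OF trunc_norm trunc_0[where a=\<phi>, OF z]]]) (auto simp: HH0)
    also have "\<dots> \<le> (ff k)\<^sup>2 + (HH k)\<^sup>2" by (rule prod_bound[OF ff0 HH0])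
    finally show ?thesis .
  qed
  show "(\<lambda>N. trunc N \<phi> k * cnj (Xts t s (trunc N \<phi>) (trunc N \<phi>) k)) \<longlonglongrightarrow> \<phi> k * cnj (Xts t s \<phi> \<phi> k)" for k
    by (intro tendsto_mult tendsto_cnj trunc_lim X_conv)
qed

lemma inner2_conv: "(\<lambda>N. l2_inner (Xts t s (trunc N \<phi>) (trunc N \<phi>)) (Xts t s (trunc N \<phi>) (trunc N \<phi>))) \<longlonglongrightarrow> l2_inner (Xts t s \<phi> \<phi>) (Xts t s \<phi> \<phi>)"
  unfolding l2_inner_def
proof (rule tendsto_mult[OF tendsto_const], rule infsum_dct)
  show "(\<lambda>k. (HH k)\<^sup>2) summable_on UNIV" by (rule HH2_summable)
  show "norm (Xts t s (trunc N \<phi>) (trunc N \<phi>) k * cnj (Xts t s (trunc N \<phi>) (trunc N \<phi>) k)) \<le> (HH k)\<^sup>2" for N k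
  proof -
    have b: "norm (Xts t s (trunc N \<phi>) (trunc N \<phi>) k) \<le> HH k"
      by (rule X_bound[where a="trunc N \<phi>", OF trunc_norm trunc_0[where a=\<phi>, OF z]])
    show ?thesis unfolding norm_mult complex_mod_cnj power2_eq_square
      by (rule mult_mono[OF b b]) (auto simp: HH0)
  qed
  show "(\<lambda>N. Xts t s (trunc N \<phi>) (trunc N \<phi>) k * cnj (Xts t s (trunc N \<phi>) (trunc N \<phi>) k)) \<longlonglongrightarrow> Xts t s \<phi> \<phi> k * cnj (Xts t s \<phi> \<phi> k)" for k
    by (intro tendsto_mult tendsto_cnj X_conv)
qed


definition "Aw k = (\<lambda>(k1,k2). uu k2 * uu (k-k1-k2))"
definition "Pm k = (\<lambda>(k1,k2). ff k1 * uu k2 * uu (k-k1-k2))"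
definition "Rq k = (\<lambda>(k1,k2). uu k2 * uu (k-k1-k2) * (ff k1)\<^sup>2)"
definition "R1 k = (\<lambda>(k1,k2). if k1 + k2 = 0 then ff k1 * uu k2 * ff (k-k1-k2) else 0)"
definition "R2 k = (\<lambda>(k1,k2). if k - k2 = 0 then ff k1 * ff k2 * uu (k-k1-k2) else 0)"
definition "WW t s k x = 2 * (Pm k x + \<bar>t - s\<bar> * (R1 k x + R2 k x))"
definition "Sr = infsum (\<lambda>j. ff j * uu (-j)) UNIV"

lemma Aw0: "0 \<le> Aw k x" by (cases x) (simp add: Aw_def uu0)
lemma Pm0: "0 \<le> Pm k x" by (cases x) (simp add: Pm_def uu0 ff0)
lemma Rq0: "0 \<le> Rq k x" by (cases x) (simp add: Rq_def uu0 ff0)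
lemma R10: "0 \<le> R1 k x" by (cases x) (simp add: R1_def uu0 ff0)
lemma R20: "0 \<le> R2 k x" by (cases x) (simp add: R2_def uu0 ff0)
lemma WW0: "0 \<le> WW t s k x" by (simp add: WW_def Pm0 R10 R20)

lemma bij_aw: "bij_betw (\<lambda>(k1::int,k2::int). (k2, k-k1-k2)) UNIV UNIV"
  by (rule bij_betwI[where g="\<lambda>(a,b). (k-a-b, a)"]) auto

lemma Aw_summable: "Aw k summable_on UNIV"
    and Aw_val: "infsum (Aw k) UNIV = UU * UU"
proof -
  have e: "Aw k = (\<lambda>x. (\<lambda>(a,b). uu a * uu b) ((\<lambda>(k1,k2). (k2, k-k1-k2)) x))"
    by (auto simp: Aw_def fun_eq_iff)
  show "Aw k summable_on UNIV" unfolding e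
    by (subst summable_on_reindex_bij_betw[OF bij_aw]) (rule tensor_uu)
  show "infsum (Aw k) UNIV = UU * UU" unfolding e
    by (subst infsum_reindex_bij_betw[OF bij_aw]) (rule tensor_uu_val)
qed

lemma Pm_summable: "Pm k summable_on UNIV"
proof (rule summable_on_comparison_test)
  show "(\<lambda>x. (1 + F2) * Aw k x) summable_on UNIV" by (intro summable_on_cmult_right Aw_summable)
  show "Pm k x \<le> (1 + F2) * Aw k x" for x
  proof (cases x)
    case (Pair k1 k2)
    have "ff k1 * (uu k2 * uu (k-k1-k2)) \<le> (1 + F2) * (uu k2 * uu (k-k1-k2))"
      by (intro mult_right_mono ff_le) (simp add: uu0)
    then show ?thesis by (simp add: Pair Pm_def Aw_def mult.assoc)
  qed
qed (rule Pm0)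

lemma Rq_summable: "Rq k summable_on UNIV"
proof (rule summable_on_comparison_test)
  show "(\<lambda>x. F2 * Aw k x) summable_on UNIV" by (intro summable_on_cmult_right Aw_summable)
  show "Rq k x \<le> F2 * Aw k x" for x
  proof (cases x)
    case (Pair k1 k2)
    have "(uu k2 * uu (k-k1-k2)) * (ff k1)\<^sup>2 \<le> (uu k2 * uu (k-k1-k2)) * F2"
      by (intro mult_left_mono ff2_le) (simp add: uu0)
    then show ?thesis by (simp add: Pair Rq_def Aw_def mult.commute)
  qed
qed (rule Rq0)

lemma bij_triple: "bij_betw (\<lambda>(a::int,(b::int,c::int)). (a+b+c,(a,b))) UNIV UNIV"
  by (rule bij_betwI[where g="\<lambda>(k,(k1,k2)). (k1,(k2,k-k1-k2))"]) auto

lemma RqS_summable: "(\<lambda>k. infsum (Rq k) UNIV) summable_on UNIV"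
proof -
  have t: "(\<lambda>(a,bc). (ff a)\<^sup>2 * (\<lambda>(b,c). uu b * uu c) bc) summable_on (UNIV \<times> UNIV)"
    by (rule tensor_summable(1)[OF ff2_summable tensor_uu]) (auto simp: uu0)
  have "(\<lambda>x. (\<lambda>(k,bc). Rq k bc) ((\<lambda>(a,(b,c)). (a+b+c,(a,b))) x)) summable_on UNIV"
  proof -
    have "(\<lambda>x. (\<lambda>(k,bc). Rq k bc) ((\<lambda>(a,(b,c)). (a+b+c,(a,b))) x)) = (\<lambda>(a,bc). (ff a)\<^sup>2 * (\<lambda>(b,c). uu b * uu c) bc)"
      by (auto simp: fun_eq_iff Rq_def mult_ac)
    then show ?thesis using t by simp
  qed
  then have "(\<lambda>(k,bc). Rq k bc) summable_on UNIV"
    by (subst (asm) summable_on_reindex_bij_betw[OF bij_triple])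
  then have "(\<lambda>(k,bc). Rq k bc) summable_on (Sigma UNIV (\<lambda>_. UNIV))" by simp
  from summable_on_Sigma_banach[OF this] show ?thesis .
qed

lemma PmS_sq: "(infsum (Pm k) UNIV)\<^sup>2 \<le> UU * UU * infsum (Rq k) UNIV"
proof -
  have e1: "Pm k = (\<lambda>x. Aw k x * ff (fst x))" by (auto simp: fun_eq_iff Pm_def Aw_def mult_ac)
  have e2: "Rq k = (\<lambda>x. Aw k x * (ff (fst x))\<^sup>2)" by (auto simp: fun_eq_iff Rq_def Aw_def mult_ac)
  have "(infsum (\<lambda>x. Aw k x * ff (fst x)) UNIV)\<^sup>2 \<le> infsum (Aw k) UNIV * infsum (\<lambda>x. Aw k x * (ff (fst x))\<^sup>2) UNIV"
    by (rule infsum_CS(2)[OF Aw0 ff0 Aw_summable]) (fold e2, rule Rq_summable)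
  then show ?thesis unfolding e1 e2 Aw_val .
qed

lemma PmS_sq_summable: "(\<lambda>k. (infsum (Pm k) UNIV)\<^sup>2) summable_on UNIV"
proof (rule summable_on_comparison_test)
  show "(\<lambda>k. UU * UU * infsum (Rq k) UNIV) summable_on UNIV" by (intro summable_on_cmult_right RqS_summable)
  show "(infsum (Pm k) UNIV)\<^sup>2 \<le> UU * UU * infsum (Rq k) UNIV" for k by (rule PmS_sq)
qed simp

lemma ff_neg: "ff (-j) = ff j"
  unfolding ff_def using rv unfolding real_valued_seq_def by simp

lemma uu_le_ff: "uu j \<le> ff j"
proof (cases "j = 0")
  case True then show ?thesis by (simp add: uu_def ff_def)
next
  case False then have "1 \<le> \<bar>real_of_int j\<bar>" by linarith
  then show ?thesis unfolding uu_def ff_def by (simp add: divide_le_eq mult_le_cancel_left1)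
qed

lemma Sr_summable: "(\<lambda>j. ff j * uu (-j)) summable_on UNIV"
proof (rule summable_on_comparison_test[OF ff2_summable])
  show "ff j * uu (-j) \<le> (ff j)\<^sup>2" for j
    using mult_left_mono[OF uu_le_ff[of "-j"] ff0[of j]] by (simp add: ff_neg power2_eq_square)
  show "0 \<le> ff j * uu (-j)" for j by (simp add: ff0 uu0)
qed

lemma R_aux:
  fixes h :: "int \<Rightarrow> int \<times> int" and R :: "int \<times> int \<Rightarrow> real"
  assumes inj: "inj h" and zero: "\<And>x. x \<notin> range h \<Longrightarrow> R x = 0" and val: "\<And>j. R (h j) = c * (ff j * uu (-j))"
  shows "R summable_on UNIV" "infsum R UNIV = c * Sr"
proof -
  have s: "(R \<circ> h) summable_on UNIV" unfolding o_def val by (intro summable_on_cmult_right Sr_summable)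
  have s2: "R summable_on range h" using s by (subst summable_on_reindex[OF inj])
  show "R summable_on UNIV"
    using s2 by (subst summable_on_cong_neutral[where T="range h" and g=R]) (auto simp: zero)
  have "infsum R UNIV = infsum R (range h)" by (rule infsum_cong_neutral) (auto simp: zero)
  also have "\<dots> = infsum (R \<circ> h) UNIV" by (rule infsum_reindex[OF inj])
  also have "\<dots> = c * Sr" unfolding o_def val Sr_def by (rule infsum_cmult_right')
  finally show "infsum R UNIV = c * Sr" .
qed

lemma R1_props: "R1 k summable_on UNIV" "infsum (R1 k) UNIV = ff k * Sr"
proof -
  have inj: "inj (\<lambda>j::int. (j, -j))" by (auto simp: inj_def)
  have zero: "R1 k x = 0" if "x \<notin> range (\<lambda>j. (j, -j))" for x
  proof (cases x)
    case (Pair a b)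
    then have "a + b \<noteq> 0" using that by (auto simp: image_iff)
    then show ?thesis by (simp add: Pair R1_def)
  qed
  have val: "R1 k ((\<lambda>j. (j, -j)) j) = ff k * (ff j * uu (-j))" for j by (simp add: R1_def mult_ac)
  show "R1 k summable_on UNIV" "infsum (R1 k) UNIV = ff k * Sr" using R_aux[OF inj zero val] by auto
qed

lemma R2_props: "R2 k summable_on UNIV" "infsum (R2 k) UNIV = ff k * Sr"
proof -
  have inj: "inj (\<lambda>j::int. (j, k))" by (auto simp: inj_def)
  have zero: "R2 k x = 0" if "x \<notin> range (\<lambda>j. (j, k))" for x
  proof (cases x)
    case (Pair a b)
    then have "k - b \<noteq> 0" using that by (auto simp: image_iff)
    then show ?thesis by (simp add: Pair R2_def)
  qed
  have val: "R2 k ((\<lambda>j. (j, k)) j) = ff k * (ff j * uu (-j))" for j by (simp add: R2_def mult_ac)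
  show "R2 k summable_on UNIV" "infsum (R2 k) UNIV = ff k * Sr" using R_aux[OF inj zero val] by auto
qed

definition "GG t s k = infsum (WW t s k) UNIV"

lemma WW_summable: "WW t s k summable_on UNIV"
  unfolding WW_def[abs_def]
  by (intro summable_on_cmult_right summable_on_add Pm_summable R1_props R2_props)

lemma GG_val: "GG t s k = 2 * (infsum (Pm k) UNIV + \<bar>t - s\<bar> * (2 * (ff k * Sr)))"
proof -
  have "GG t s k = 2 * (infsum (Pm k) UNIV + \<bar>t - s\<bar> * (infsum (R1 k) UNIV + infsum (R2 k) UNIV))"
    unfolding GG_def WW_def[abs_def]
    by (simp add: infsum_cmult_right' infsum_add Pm_summable R1_props(1) R2_props(1) summable_on_add summable_on_cmult_right)
  then show ?thesis by (simp add: R1_props(2) R2_props(2))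
qed

lemma GG0: "0 \<le> GG t s k" unfolding GG_def by (intro infsum_nonneg WW0)

lemma GG2_summable: "(\<lambda>k. (GG t s k)\<^sup>2) summable_on UNIV"
proof (rule summable_on_comparison_test)
  show "(\<lambda>k. 8 * (infsum (Pm k) UNIV)\<^sup>2 + (8 * (2 * \<bar>t - s\<bar> * Sr)\<^sup>2) * (ff k)\<^sup>2) summable_on UNIV"
    by (intro summable_on_add summable_on_cmult_right PmS_sq_summable ff2_summable)
  show "(GG t s k)\<^sup>2 \<le> 8 * (infsum (Pm k) UNIV)\<^sup>2 + (8 * (2 * \<bar>t - s\<bar> * Sr)\<^sup>2) * (ff k)\<^sup>2" for k
  proof -
    define P where "P = infsum (Pm k) UNIV"
    define X where "X = \<bar>t - s\<bar> * (2 * (ff k * Sr))"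
    have "(GG t s k)\<^sup>2 = (2 * (P + X))\<^sup>2" unfolding GG_val P_def X_def ..
    also have "\<dots> \<le> 8 * P\<^sup>2 + 8 * X\<^sup>2"
    proof -
      have e: "(2 * (P + X))\<^sup>2 = 4 * P\<^sup>2 + 8 * (P * X) + 4 * X\<^sup>2" by (simp add: power2_eq_square algebra_simps)
      have "2 * (P * X) \<le> P\<^sup>2 + X\<^sup>2" using sum_squares_bound[of P X] by (simp add: mult.assoc)
      then show ?thesis unfolding e by linarith
    qed
    also have "X\<^sup>2 = (2 * \<bar>t - s\<bar> * Sr)\<^sup>2 * (ff k)\<^sup>2" unfolding X_def by (simp add: power_mult_distrib mult_ac)
    finally show ?thesis unfolding P_def by (simp add: mult_ac)
  qed
qed simp


definition "Zs t s a k = (\<lambda>(k1,k2). 2 * Kf t s k k1 k2 * a k1 * a k2 * a (k-k1-k2))"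

lemma Db_identity:
  fixes K2 K3 T f1 f2 f3 :: real
  assumes "K2 \<noteq> 0" "K3 \<noteq> 0"
  shows "(1 / (K2 * K3) + T * ((if p then 1 / K2 else 0) + (if q then 1 / K3 else 0))) * (f1 * f2 * f3)
     = f1 * (f2 / K2) * (f3 / K3) + T * ((if p then f1 * (f2 / K2) * f3 else 0) + (if q then f1 * f2 * (f3 / K3) else 0))"
  using assms by (cases p; cases q) (simp_all add: field_simps)

lemma Z_bound:
  assumes an: "\<And>j. norm (a j) \<le> norm (\<phi> j)"
  shows "norm (Zs t s a k x) \<le> WW t s k x"
proof (cases x)
  case (Pair k1 k2)
  have a0: "a 0 = 0" using an[of 0] z by simp
  show ?thesis
  proof (cases "k1 = 0 \<or> k2 = 0 \<or> k - k1 - k2 = 0")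
    case True
    then have "Zs t s a k x = 0" by (auto simp: Pair Zs_def a0)
    then show ?thesis by (simp add: WW0)
  next
    case False
    then have nz: "k1 \<noteq> 0" "k2 \<noteq> 0" "k - k1 - k2 \<noteq> 0" by auto
    define K2 where "K2 = \<bar>real_of_int k2\<bar>"
    define K3 where "K3 = \<bar>real_of_int (k - k1 - k2)\<bar>"
    have K2: "K2 \<noteq> 0" and K3: "K3 \<noteq> 0" using nz by (auto simp: K2_def K3_def)
    define Db where "Db = 1 / (K2 * K3) + \<bar>t - s\<bar> * ((if k1 + k2 = 0 then 1 / K2 else 0) + (if k - k2 = 0 then 1 / K3 else 0))"
    have Db0: "0 \<le> Db" by (simp add: Db_def K2_def K3_def)
    have kb: "norm (Kf t s k k1 k2) \<le> Db"
      unfolding Db_def K2_def K3_def by (rule Kf_bound[OF nz])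
    have "norm (Zs t s a k x) = 2 * norm (Kf t s k k1 k2) * (norm (a k1) * norm (a k2) * norm (a (k-k1-k2)))"
      by (simp add: Pair Zs_def norm_mult mult_ac)
    also have "\<dots> \<le> 2 * Db * (norm (\<phi> k1) * norm (\<phi> k2) * norm (\<phi> (k-k1-k2)))"
      by (intro mult_mono kb an mult_left_mono) (auto simp: Db0)
    also have "\<dots> = 2 * (Db * (norm (\<phi> k1) * norm (\<phi> k2) * norm (\<phi> (k-k1-k2))))" by simp
    also have "Db * (norm (\<phi> k1) * norm (\<phi> k2) * norm (\<phi> (k-k1-k2))) = Pm k x + \<bar>t - s\<bar> * (R1 k x + R2 k x)"
      unfolding Db_def Db_identity[OF K2 K3]
      by (simp add: Pair Pm_def R1_def R2_def uu_def ff_def K2_def K3_def)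
    finally show ?thesis unfolding WW_def .
  qed
qed

lemma X2_repr: "X2_trig t s (trunc N \<phi>) (trunc N \<phi>) (trunc N \<phi>) k = infsum (Zs t s (trunc N \<phi>) k) UNIV"
proof -
  have f: "fsupp N (trunc N \<phi>)" by (rule trunc_fsupp)
  have z0: "trunc N \<phi> 0 = 0" by (rule trunc_0[where a=\<phi>, OF z])
  have "X2_trig t s (trunc N \<phi>) (trunc N \<phi>) (trunc N \<phi>) k = (\<Sum>x\<in>{-int N..int N} \<times> {-int N..int N}. Zs t s (trunc N \<phi>) k x)"
    unfolding X2_trig_formula[where a="trunc N \<phi>" and b="trunc N \<phi>" and c="trunc N \<phi>", OF f z0 f z0 f z0]
    by (simp add: sum.cartesian_product Zs_def)
  also have "\<dots> = infsum (Zs t s (trunc N \<phi>) k) UNIV"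
  proof (rule infsum_fin[symmetric])
    fix x assume "x \<notin> {-int N..int N} \<times> {-int N..int N}"
    then show "Zs t s (trunc N \<phi>) k x = 0" by (cases x) (auto simp: Zs_def trunc_def)
  qed simp
  finally show ?thesis .
qed

definition "Psi t s k = infsum (Zs t s \<phi> k) UNIV"

lemma X2_bound: "norm (X2_trig t s (trunc N \<phi>) (trunc N \<phi>) (trunc N \<phi>) k) \<le> GG t s k"
  unfolding X2_repr GG_def
  by (rule dom_summable(2)[OF WW_summable]) (rule Z_bound[where a="trunc N \<phi>", OF trunc_norm])

lemma Psi_bound: "norm (Psi t s k) \<le> GG t s k"
  unfolding Psi_def GG_def
  by (rule dom_summable(2)[OF WW_summable]) (rule Z_bound[where a=\<phi>], simp)

lemma X2_conv: "(\<lambda>N. X2_trig t s (trunc N \<phi>) (trunc N \<phi>) (trunc N \<phi>) k) \<longlonglongrightarrow> Psi t s k"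
  unfolding X2_repr Psi_def
proof (rule infsum_dct[OF WW_summable])
  show "norm (Zs t s (trunc N \<phi>) k x) \<le> WW t s k x" for N x
    by (rule Z_bound[where a="trunc N \<phi>", OF trunc_norm])
  show "(\<lambda>N. Zs t s (trunc N \<phi>) k x) \<longlonglongrightarrow> Zs t s \<phi> k x" for x
    by (cases x) (simp add: Zs_def, intro tendsto_mult tendsto_const trunc_lim)
qed

lemma Psi_l2: "l2_seq (Psi t s)"
  unfolding l2_seq_def
proof (rule summable_on_comparison_test[OF GG2_summable])
  show "(norm (Psi t s k))\<^sup>2 \<le> (GG t s k)\<^sup>2" for k using Psi_bound[of t s k] by (simp add: power_mono)
qed simp

lemma X2_l2conv: "(\<lambda>N. \<Sum>\<^sub>\<infinity>k. (norm (X2_trig t s (trunc N \<phi>) (trunc N \<phi>) (trunc N \<phi>) k - Psi t s k))\<^sup>2) \<longlonglongrightarrow> 0"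
proof -
  have "(\<lambda>N. \<Sum>\<^sub>\<infinity>k. (norm (X2_trig t s (trunc N \<phi>) (trunc N \<phi>) (trunc N \<phi>) k - Psi t s k))\<^sup>2) \<longlonglongrightarrow> (\<Sum>\<^sub>\<infinity>k::int. (0::real))"
  proof (rule infsum_dct)
    show "(\<lambda>k. 4 * (GG t s k)\<^sup>2) summable_on UNIV" by (intro summable_on_cmult_right GG2_summable)
    show "norm ((norm (X2_trig t s (trunc N \<phi>) (trunc N \<phi>) (trunc N \<phi>) k - Psi t s k))\<^sup>2) \<le> 4 * (GG t s k)\<^sup>2" for N k
    proof -
      have "norm (X2_trig t s (trunc N \<phi>) (trunc N \<phi>) (trunc N \<phi>) k - Psi t s k) \<le> GG t s k + GG t s k"
        using norm_triangle_ineq4[of "X2_trig t s (trunc N \<phi>) (trunc N \<phi>) (trunc N \<phi>) k" "Psi t s k"] X2_bound[of t s N k] Psi_bound[of t s k]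
        by linarith
      then have "(norm (X2_trig t s (trunc N \<phi>) (trunc N \<phi>) (trunc N \<phi>) k - Psi t s k))\<^sup>2 \<le> (2 * GG t s k)\<^sup>2"
        by (intro power_mono) auto
      then show ?thesis by (simp add: power2_eq_square)
    qed
    show "(\<lambda>N. (norm (X2_trig t s (trunc N \<phi>) (trunc N \<phi>) (trunc N \<phi>) k - Psi t s k))\<^sup>2) \<longlonglongrightarrow> 0" for k
    proof -
      have "(\<lambda>N. (norm (X2_trig t s (trunc N \<phi>) (trunc N \<phi>) (trunc N \<phi>) k - Psi t s k))\<^sup>2) \<longlonglongrightarrow> (norm (Psi t s k - Psi t s k))\<^sup>2"
        by (intro tendsto_intros X2_conv)
      then show ?thesis by simp
    qed
  qed
  then show ?thesis by simp
qed

lemma X2ts_eq: "X2ts t s \<phi> \<phi> \<phi> = Psi t s"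
  unfolding X2ts_def
proof (rule the_equality)
  show "l2_seq (Psi t s) \<and> (\<lambda>N. \<Sum>\<^sub>\<infinity>k. (norm (X2_trig t s (trunc N \<phi>) (trunc N \<phi>) (trunc N \<phi>) k - Psi t s k))\<^sup>2) \<longlonglongrightarrow> 0"
    using Psi_l2 X2_l2conv by simp
  fix \<psi> assume h: "l2_seq \<psi> \<and> (\<lambda>N. \<Sum>\<^sub>\<infinity>k. (norm (X2_trig t s (trunc N \<phi>) (trunc N \<phi>) (trunc N \<phi>) k - \<psi> k))\<^sup>2) \<longlonglongrightarrow> 0"
  show "\<psi> = Psi t s"
  proof
    fix k
    define D where "D N j = (norm (X2_trig t s (trunc N \<phi>) (trunc N \<phi>) (trunc N \<phi>) j - \<psi> j))\<^sup>2" for N j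
    have sD: "D N summable_on UNIV" for N
    proof (rule summable_on_comparison_test)
      show "(\<lambda>j. 2 * (GG t s j)\<^sup>2 + 2 * (norm (\<psi> j))\<^sup>2) summable_on UNIV"
        using h unfolding l2_seq_def by (intro summable_on_add summable_on_cmult_right GG2_summable) auto
      show "D N j \<le> 2 * (GG t s j)\<^sup>2 + 2 * (norm (\<psi> j))\<^sup>2" for j
      proof -
        have "norm (X2_trig t s (trunc N \<phi>) (trunc N \<phi>) (trunc N \<phi>) j - \<psi> j) \<le> GG t s j + norm (\<psi> j)"
          using norm_triangle_ineq4[of "X2_trig t s (trunc N \<phi>) (trunc N \<phi>) (trunc N \<phi>) j" "\<psi> j"] X2_bound[of t s N j]
          by linarith
        then have "D N j \<le> (GG t s j + norm (\<psi> j))\<^sup>2" unfolding D_def by (intro power_mono) auto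
        also have "\<dots> \<le> 2 * (GG t s j)\<^sup>2 + 2 * (norm (\<psi> j))\<^sup>2"
        proof -
          have "2 * (GG t s j * norm (\<psi> j)) \<le> (GG t s j)\<^sup>2 + (norm (\<psi> j))\<^sup>2"
            using sum_squares_bound[of "GG t s j" "norm (\<psi> j)"] by (simp add: mult.assoc)
          then show ?thesis by (simp add: power2_eq_square algebra_simps)
        qed
        finally show ?thesis .
      qed
    qed (simp add: D_def)
    have le: "D N k \<le> infsum (D N) UNIV" for N
      by (rule single_le_infsum[OF sD]) (auto simp: D_def)
    have "(\<lambda>N. D N k) \<longlonglongrightarrow> 0"
    proof (rule tendsto_sandwich[where f="\<lambda>_. 0" and h="\<lambda>N. infsum (D N) UNIV"])
      show "\<forall>\<^sub>F N in sequentially. 0 \<le> D N k" by (simp add: D_def)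
      show "\<forall>\<^sub>F N in sequentially. D N k \<le> infsum (D N) UNIV" using le by simp
      show "(\<lambda>N. infsum (D N) UNIV) \<longlonglongrightarrow> 0" using h unfolding D_def by simp
    qed simp
    then have "(\<lambda>N. sqrt (D N k)) \<longlonglongrightarrow> sqrt 0" by (rule tendsto_real_sqrt)
    then have "(\<lambda>N. norm (X2_trig t s (trunc N \<phi>) (trunc N \<phi>) (trunc N \<phi>) k - \<psi> k)) \<longlonglongrightarrow> 0"
      unfolding D_def by simp
    then have "(\<lambda>N. X2_trig t s (trunc N \<phi>) (trunc N \<phi>) (trunc N \<phi>) k) \<longlonglongrightarrow> \<psi> k"
      by (simp add: tendsto_norm_zero_iff LIM_zero_iff)
    from LIMSEQ_unique[OF this X2_conv] show "\<psi> k = Psi t s k" .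
  qed
qed

lemma inner3_conv: "(\<lambda>N. l2_inner (trunc N \<phi>) (X2_trig t s (trunc N \<phi>) (trunc N \<phi>) (trunc N \<phi>))) \<longlonglongrightarrow> l2_inner \<phi> (Psi t s)"
  unfolding l2_inner_def
proof (rule tendsto_mult[OF tendsto_const], rule infsum_dct)
  show "(\<lambda>k. (ff k)\<^sup>2 + (GG t s k)\<^sup>2) summable_on UNIV" by (intro summable_on_add ff2_summable GG2_summable)
  show "norm (trunc N \<phi> k * cnj (X2_trig t s (trunc N \<phi>) (trunc N \<phi>) (trunc N \<phi>) k)) \<le> (ff k)\<^sup>2 + (GG t s k)\<^sup>2" for N k
  proof -
    have "norm (trunc N \<phi> k * cnj (X2_trig t s (trunc N \<phi>) (trunc N \<phi>) (trunc N \<phi>) k)) \<le> ff k * GG t s k"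
      unfolding norm_mult complex_mod_cnj ff_def
      by (rule mult_mono[OF trunc_norm X2_bound]) (auto simp: GG0)
    also have "\<dots> \<le> (ff k)\<^sup>2 + (GG t s k)\<^sup>2" by (rule prod_bound[OF ff0 GG0])
    finally show ?thesis .
  qed
  show "(\<lambda>N. trunc N \<phi> k * cnj (X2_trig t s (trunc N \<phi>) (trunc N \<phi>) (trunc N \<phi>) k)) \<longlonglongrightarrow> \<phi> k * cnj (Psi t s k)" for k
    by (intro tendsto_mult tendsto_cnj trunc_lim X2_conv)
qed

end

theorem lemma3:
  fixes \<phi> :: "int \<Rightarrow> complex" and s t :: real
  assumes "l2_seq \<phi>" and "real_valued_seq \<phi>" and "\<phi> 0 = 0"
  shows "l2_inner \<phi> (Xts t s \<phi> \<phi>) = 0 \<and>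
    2 * l2_inner \<phi> (X2ts t s \<phi> \<phi> \<phi>) + l2_inner (Xts t s \<phi> \<phi>) (Xts t s \<phi> \<phi>) = 0"
proof
  have f: "fsupp N (trunc N \<phi>)" for N by (rule trunc_fsupp)
  have z0: "trunc N \<phi> 0 = 0" for N by (rule trunc_0[where a=\<phi>, OF assms(3)])
  have r: "real_valued_seq (trunc N \<phi>)" for N by (rule trunc_rv[OF assms(2)])
  have c1: "(\<lambda>N. l2_inner (trunc N \<phi>) (Xts t s (trunc N \<phi>) (trunc N \<phi>))) \<longlonglongrightarrow> l2_inner \<phi> (Xts t s \<phi> \<phi>)"
    by (rule inner1_conv[OF assms])
  moreover have "(\<lambda>N. l2_inner (trunc N \<phi>) (Xts t s (trunc N \<phi>) (trunc N \<phi>))) = (\<lambda>N. 0)"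
    using trig1[OF f z0 r] by auto
  ultimately show "l2_inner \<phi> (Xts t s \<phi> \<phi>) = 0"
    using LIMSEQ_unique tendsto_const by metis
  have c2: "(\<lambda>N. 2 * l2_inner (trunc N \<phi>) (X2_trig t s (trunc N \<phi>) (trunc N \<phi>) (trunc N \<phi>))
       + l2_inner (Xts t s (trunc N \<phi>) (trunc N \<phi>)) (Xts t s (trunc N \<phi>) (trunc N \<phi>)))
     \<longlonglongrightarrow> 2 * l2_inner \<phi> (Psi \<phi> t s) + l2_inner (Xts t s \<phi> \<phi>) (Xts t s \<phi> \<phi>)"
    by (intro tendsto_add tendsto_mult tendsto_const inner3_conv[OF assms] inner2_conv[OF assms])
  moreover have "(\<lambda>N. 2 * l2_inner (trunc N \<phi>) (X2_trig t s (trunc N \<phi>) (trunc N \<phi>) (trunc N \<phi>))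
       + l2_inner (Xts t s (trunc N \<phi>) (trunc N \<phi>)) (Xts t s (trunc N \<phi>) (trunc N \<phi>))) = (\<lambda>N. 0)"
    using trig2[OF f z0 r] by auto
  ultimately have "2 * l2_inner \<phi> (Psi \<phi> t s) + l2_inner (Xts t s \<phi> \<phi>) (Xts t s \<phi> \<phi>) = 0"
    using LIMSEQ_unique tendsto_const by metis
  then show "2 * l2_inner \<phi> (X2ts t s \<phi> \<phi> \<phi>) + l2_inner (Xts t s \<phi> \<phi>) (Xts t s \<phi> \<phi>) = 0"
    by (simp add: X2ts_eq[OF assms])
qed


end
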